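(* Let $0<\alpha\leq2$, let $X$ be a scalar symmetric $\alpha$-stable Lévy process with $X_0=0$ and $\mathbb{E}[e^{iuX_t}]=e^{-|u|^\alpha t}$, let $T>0$, $n\in\mathbb{N}$, $\Delta_n=T/n$, $t_k=k\Delta_n$, $\mathcal{O}_T(0)=\int_0^T\mathbf{1}(X_t\geq0)dt$ and $\hat{\mathcal{O}}_{T,n}(0)=\Delta_n\sum_{k=1}^n\mathbf{1}(X_{t_{k-1}}\geq0)$. Let $Z,\tilde Z$ be independent with characteristic function $e^{-|u|^\alpha}$, $D=(1+|\tilde Z/Z|^\alpha)^{-1}$ and $\psi(x)=(x-\lfloor x\rfloor)-(x-\lfloor x\rfloor)^2$. Then \[ 2\,\mathbb{E}[\mathcal{O}_T(0)\hat{\mathcal{O}}_{T,n}(0)]=\frac34T^2+\frac38T\Delta_n-\frac18\Delta_n^2\,\mathbb{E}\Bigl[\frac{\psi(nD)}{D(1-D)}\Bigr]. \] *)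

theory Defs
  imports "HOL-Probability.Probability"
begin

definition sym_stable_levy :: "'a measure \<Rightarrow> real \<Rightarrow> (real \<Rightarrow> 'a \<Rightarrow> real) \<Rightarrow> bool" where
  "sym_stable_levy M \<alpha> X \<longleftrightarrow>
     prob_space M \<and>
     (\<forall>\<omega>\<in>space M. X 0 \<omega> = 0) \<and>
     (\<forall>t\<ge>0. X t \<in> borel_measurable M) \<and>
     (\<forall>(ts :: nat \<Rightarrow> real) k. 0 \<le> ts 0 \<and> (\<forall>i<k. ts i < ts (Suc i)) \<longrightarrow>
        prob_space.indep_vars M (\<lambda>_. borel) (\<lambda>i \<omega>. X (ts (Suc i)) \<omega> - X (ts i) \<omega>) {..<k}) \<and>
     (\<forall>s t u. 0 \<le> s \<and> s \<le> t \<longrightarrow>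
        char (distr M borel (\<lambda>\<omega>. X t \<omega> - X s \<omega>)) u
          = complex_of_real (exp (- (\<bar>u\<bar> powr \<alpha>) * (t - s)))) \<and>
     (\<forall>\<omega>\<in>space M. \<forall>t\<ge>0. continuous (at_right t) (\<lambda>s. X s \<omega>) \<and>
        (0 < t \<longrightarrow> (\<exists>l. ((\<lambda>s. X s \<omega>) \<longlongrightarrow> l) (at_left t))))"

definition psi :: "real \<Rightarrow> real" where
  "psi x = frac x - (frac x)\<^sup>2"

definition occ_time :: "(real \<Rightarrow> 'a \<Rightarrow> real) \<Rightarrow> real \<Rightarrow> 'a \<Rightarrow> real" where
  "occ_time X T \<omega> = (LBINT t:{0..T}. indicator {0..} (X t \<omega>))"

definition occ_est :: "(real \<Rightarrow> 'a \<Rightarrow> real) \<Rightarrow> real \<Rightarrow> nat \<Rightarrow> 'a \<Rightarrow> real" where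
  "occ_est X T n \<omega> = (T / real n) * (\<Sum>k=1..n. indicator {0..} (X (real (k - 1) * (T / real n)) \<omega>))"

end

theory Submission
  imports Defs
begin

lemma exp_pow_bound:
  fixes x :: real assumes "0 \<le> x" "0 < m"
  shows "x ^ m \<le> real m ^ m * exp x"
proof -
  have "x / m \<le> exp (x / m)" using exp_ge_add_one_self[of "x/m"] by linarith
  then have "(x / m) ^ m \<le> exp (x / m) ^ m" using assms by (intro power_mono) auto
  also have "\<dots> = exp x" using assms by (simp add: exp_of_nat_mult[symmetric])
  finally show ?thesis using assms by (simp add: power_divide field_simps)
qed

lemma stab_bound:
  fixes \<alpha> :: real assumes "0 < \<alpha>"
  shows "exp (- (\<bar>t\<bar> powr \<alpha>)) \<le> (1 + real (nat \<lceil>2/\<alpha>\<rceil> + 1) ^ (nat \<lceil>2/\<alpha>\<rceil> + 1)) * inverse (1 + t^2)"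
proof -
  define m where "m = nat \<lceil>2/\<alpha>\<rceil> + 1"
  define C where "C = real m ^ m"
  have m0: "0 < m" by (simp add: m_def)
  have C1: "1 \<le> C" unfolding C_def using m0 by (simp add: one_le_power)
  have "(1 + t^2) * exp (- (\<bar>t\<bar> powr \<alpha>)) \<le> 1 + C"
  proof (cases "\<bar>t\<bar> \<le> 1")
    case True
    have "t^2 \<le> 1" using True by (simp add: abs_le_square_iff power2_eq_square) (metis abs_mult abs_square_le_1 power2_eq_square True)
    moreover have "exp (- (\<bar>t\<bar> powr \<alpha>)) \<le> 1" by simp
    ultimately have "(1 + t^2) * exp (- (\<bar>t\<bar> powr \<alpha>)) \<le> 2 * 1"
      by (intro mult_mono) auto
    then show ?thesis using C1 by simp
  next
    case False
    define x where "x = \<bar>t\<bar> powr \<alpha>"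
    have x1: "1 \<le> x" unfolding x_def using False assms by (simp add: ge_one_powr_ge_zero)
    have "t^2 = \<bar>t\<bar> powr 2" using False by (simp add: powr_numeral)
    also have "\<dots> = x powr (2/\<alpha>)" unfolding x_def using assms by (simp add: powr_powr)
    also have "\<dots> \<le> x powr m" using x1 unfolding m_def
      by (intro powr_mono) (auto, linarith)
    also have "\<dots> = x ^ m" using x1 by (simp add: powr_realpow)
    also have "\<dots> \<le> C * exp x" unfolding C_def using exp_pow_bound[OF _ m0, of x] x1 by simp
    finally have t2: "t^2 \<le> C * exp x" .
    have "(1 + t^2) * exp (-x) = exp (-x) + t^2 * exp (-x)" by (simp add: algebra_simps)
    also have "\<dots> \<le> 1 + C * exp x * exp (-x)"
      using t2 x1 by (intro add_mono mult_right_mono) auto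
    also have "\<dots> = 1 + C" by (simp add: exp_minus)
    finally show ?thesis unfolding x_def .
  qed
  then show ?thesis unfolding m_def[symmetric] C_def[symmetric]
    by (simp add: pos_le_divide_eq divide_simps add_pos_nonneg algebra_simps)
qed

lemma stab_integrable:
  fixes \<alpha> :: real assumes "0 < \<alpha>"
  shows "integrable lborel (\<lambda>t::real. exp (- (\<bar>t\<bar> powr \<alpha>)))"
proof (rule Bochner_Integration.integrable_bound)
  show "integrable lborel (\<lambda>t::real. (1 + real (nat \<lceil>2/\<alpha>\<rceil> + 1) ^ (nat \<lceil>2/\<alpha>\<rceil> + 1)) * inverse (1 + t^2))"
    using integrable_inverse_1_plus_square by (simp add: set_integrable_def einterval_def)
  show "AE t in lborel. norm (exp (- (\<bar>t\<bar> powr \<alpha>))) \<le> norm ((1 + real (nat \<lceil>2/\<alpha>\<rceil> + 1) ^ (nat \<lceil>2/\<alpha>\<rceil> + 1)) * inverse (1 + t^2))"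
    using stab_bound[OF assms] by (auto intro!: AE_I2 simp: abs_mult add_pos_nonneg)
qed measurable

lemma char_distr_scale:
  assumes "real_distribution \<mu>"
  shows "char (distr \<mu> borel (\<lambda>x. c * x)) u = char \<mu> (c * u)"
  unfolding char_def using assms
  by (subst integral_distr) (auto simp: real_distribution_def real_distribution_axioms_def ac_simps)

lemma Levy_bound:
  fixes \<alpha> a b :: real
  assumes "real_distribution \<mu>" "0 < \<alpha>" "\<And>u. char \<mu> u = complex_of_real (exp (- (\<bar>u\<bar> powr \<alpha>)))"
    and "a \<le> b" "measure \<mu> {a} = 0" "measure \<mu> {b} = 0"
  shows "measure \<mu> {a<..b} \<le> (b - a) * (\<integral>t. exp (- (\<bar>t\<bar> powr \<alpha>)) \<partial>lborel) / (2 * pi)"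
proof -
  interpret real_distribution \<mu> by fact
  define K where "K = (\<integral>t. exp (- (\<bar>t\<bar> powr \<alpha>)) \<partial>lborel)"
  define G where "G = (\<lambda>t. (iexp (- (t * a)) - iexp (- (t * b))) / (\<i> * complex_of_real t) * char \<mu> t)"
  have G: "norm (G t) \<le> (b - a) * exp (- (\<bar>t\<bar> powr \<alpha>))" for t
  proof (cases "t = 0")
    case True then show ?thesis using assms by (simp add: G_def)
  next
    case False
    have "cmod ((iexp (t * (-a)) - iexp (t * (-b))) / (\<i> * t)) \<le> (-a) - (-b)"
      using Levy_Inversion_aux2[of "-b" "-a" t] False assms by simp
    then have "cmod ((iexp (- (t * a)) - iexp (- (t * b))) / (\<i> * complex_of_real t)) \<le> b - a"
      by simp
    then show ?thesis unfolding G_def norm_mult assms(3)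
      by (simp add: mult_right_mono)
  qed
  have bnd: "norm (complex_of_real (1 / (2 * pi)) * interval_lebesgue_integral lborel (ereal (- real T)) (ereal (real T)) G)
      \<le> (b - a) * K / (2 * pi)" for T :: nat
  proof -
    have "norm (interval_lebesgue_integral lborel (ereal (- real T)) (ereal (real T)) G)
        = norm (\<integral>t. indicator (einterval (- real T) (real T)) t *\<^sub>R G t \<partial>lborel)"
      by (simp add: interval_lebesgue_integral_def set_lebesgue_integral_def)
    also have "\<dots> \<le> (\<integral>t. norm (indicator (einterval (- real T) (real T)) t *\<^sub>R G t) \<partial>lborel)"
      by (rule integral_norm_bound)
    also have "\<dots> \<le> (\<integral>t. (b - a) * exp (- (\<bar>t\<bar> powr \<alpha>)) \<partial>lborel)"
    proof (rule integral_mono')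
      show "integrable lborel (\<lambda>t. (b - a) * exp (- (\<bar>t\<bar> powr \<alpha>)))"
        using stab_integrable[OF assms(2)] by simp
      show "norm (indicator (einterval (- real T) (real T)) t *\<^sub>R G t) \<le> (b - a) * exp (- (\<bar>t\<bar> powr \<alpha>))" for t
        using G[of t] assms(4) by (auto simp: indicator_def)
      show "0 \<le> (b - a) * exp (- (\<bar>t\<bar> powr \<alpha>))" for t using assms(4) by simp
    qed
    also have "\<dots> = (b - a) * K" by (simp add: K_def)
    finally show ?thesis by (simp add: norm_mult norm_divide divide_simps)
  qed
  have lim: "(\<lambda>T::nat. complex_of_real (1 / (2 * pi)) * interval_lebesgue_integral lborel (ereal (- real T)) (ereal (real T)) G)
     \<longlonglongrightarrow> complex_of_real (measure \<mu> {a<..b})"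
    using Levy_Inversion[OF assms(4-6)] unfolding G_def by simp
  have "norm (complex_of_real (measure \<mu> {a<..b})) \<le> (b - a) * K / (2 * pi)"
    by (rule LIMSEQ_le_const2[OF tendsto_norm[OF lim]]) (use bnd in auto)
  then show ?thesis unfolding K_def by simp
qed

lemma no_atom:
  fixes \<alpha> :: real
  assumes "real_distribution \<mu>" "0 < \<alpha>" "\<And>u. char \<mu> u = complex_of_real (exp (- (\<bar>u\<bar> powr \<alpha>)))"
  shows "measure \<mu> {0} = 0"
proof -
  interpret real_distribution \<mu> by fact
  define K where "K = (\<integral>t. exp (- (\<bar>t\<bar> powr \<alpha>)) \<partial>lborel)"
  have K0: "0 \<le> K" unfolding K_def by (intro integral_nonneg_AE) auto
  have "measure \<mu> {0} \<le> e" if e: "0 < e" for e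
  proof -
    define d where "d = e * pi / (K + 1)"
    have d0: "0 < d" unfolding d_def using e K0 by (simp add: add_nonneg_pos)
    obtain a where a: "a \<in> {-d<..<0}" "a \<notin> {x. measure \<mu> {x} \<noteq> 0}"
      using open_minus_countable[OF countable_support, of "{-d<..<0}"] d0 by auto
    obtain b where b: "b \<in> {0<..<d}" "b \<notin> {x. measure \<mu> {x} \<noteq> 0}"
      using open_minus_countable[OF countable_support, of "{0<..<d}"] d0 by auto
    have "measure \<mu> {0} \<le> measure \<mu> {a<..b}"
      using a b by (intro finite_measure_mono) auto
    also have "\<dots> \<le> (b - a) * K / (2 * pi)"
      unfolding K_def using a b by (intro Levy_bound[OF assms]) auto
    also have "\<dots> \<le> (2 * d) * K / (2 * pi)"
      using a b K0 by (intro divide_right_mono mult_right_mono) auto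
    also have "\<dots> = e * K / (K + 1)" unfolding d_def using K0 pi_gt_zero
      by (simp add: divide_simps)
    also have "\<dots> \<le> e" using e K0 by (simp add: divide_simps)
    finally show ?thesis .
  qed
  then have "measure \<mu> {0} \<le> 0" by (meson dense_le_bounded less_imp_le not_le)
  then show ?thesis by (simp add: measure_le_0_iff)
qed

lemma real_distribution_distr_rv:
  assumes "prob_space M" "W \<in> borel_measurable M"
  shows "real_distribution (distr M borel W)"
  using assms by (simp add: real_distribution_def real_distribution_axioms_def prob_space.prob_space_distr)

lemma distr_scale_eq:
  fixes \<alpha> s :: real
  assumes "prob_space N" "Z \<in> borel_measurable N"
    and chZ: "\<And>u. char (distr N borel Z) u = complex_of_real (exp (- (\<bar>u\<bar> powr \<alpha>)))"
    and "prob_space M" "W \<in> borel_measurable M"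
    and chW: "\<And>u. char (distr M borel W) u = complex_of_real (exp (- (\<bar>u\<bar> powr \<alpha>) * s))"
    and "0 \<le> s" "0 < \<alpha>"
  shows "distr M borel W = distr N borel (\<lambda>\<omega>. s powr (1/\<alpha>) * Z \<omega>)"
proof (rule Levy_uniqueness)
  show "real_distribution (distr M borel W)" by (rule real_distribution_distr_rv) fact+
  show "real_distribution (distr N borel (\<lambda>\<omega>. s powr (1/\<alpha>) * Z \<omega>))"
    by (rule real_distribution_distr_rv) (use assms in auto)
  define c where "c = s powr (1/\<alpha>)"
  have c0: "0 \<le> c" by (simp add: c_def)
  have cpow: "c powr \<alpha> = s"
    unfolding c_def using assms by (simp add: powr_powr)
  have "distr N borel (\<lambda>\<omega>. c * Z \<omega>) = distr (distr N borel Z) borel (\<lambda>x. c * x)"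
    using assms by (subst distr_distr) (auto simp: comp_def)
  then have "char (distr N borel (\<lambda>\<omega>. c * Z \<omega>)) u = char (distr N borel Z) (c * u)" for u
    using char_distr_scale[OF real_distribution_distr_rv[OF assms(1,2)]] by simp
  also have "\<dots> u = complex_of_real (exp (- (\<bar>u\<bar> powr \<alpha>) * s))" for u
    using chZ[of "c * u"] c0 cpow by (simp add: abs_mult powr_mult mult.commute)
  finally show "char (distr M borel W) = char (distr N borel (\<lambda>\<omega>. s powr (1/\<alpha>) * Z \<omega>))"
    using chW unfolding c_def by (intro ext) simp
qed

lemma distr_neg_eq:
  fixes \<alpha> :: real
  assumes "prob_space N" "Z \<in> borel_measurable N"
    and chZ: "\<And>u. char (distr N borel Z) u = complex_of_real (exp (- (\<bar>u\<bar> powr \<alpha>)))"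
  shows "distr N borel (\<lambda>\<omega>. - Z \<omega>) = distr N borel Z"
proof (rule Levy_uniqueness)
  show "real_distribution (distr N borel Z)" by (rule real_distribution_distr_rv) fact+
  show "real_distribution (distr N borel (\<lambda>\<omega>. - Z \<omega>))"
    by (rule real_distribution_distr_rv) (use assms in auto)
  have "char (distr N borel (\<lambda>\<omega>. - Z \<omega>)) u = char (distr N borel Z) (- u)" for u
    unfolding char_def using assms by (simp add: integral_distr)
  then show "char (distr N borel (\<lambda>\<omega>. - Z \<omega>)) = char (distr N borel Z)"
    using chZ by (intro ext) simp
qed

lemma indep_pair_integral_eq:
  fixes A B :: "'a \<Rightarrow> real" and A' B' :: "'b \<Rightarrow> real"
  assumes "prob_space M" "prob_space N"
    and "prob_space.indep_var M borel A borel B" "prob_space.indep_var N borel A' borel B'"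
    and "distr M borel A = distr N borel A'" "distr M borel B = distr N borel B'"
    and g: "(g :: real \<times> real \<Rightarrow> real) \<in> borel_measurable (borel \<Otimes>\<^sub>M borel)"
  shows "(\<integral>x. g (A x, B x) \<partial>M) = (\<integral>x. g (A' x, B' x) \<partial>N)"
proof -
  interpret M: prob_space M by fact
  interpret N: prob_space N by fact
  have M: "M.random_variable borel A" "M.random_variable borel B"
    "distr M borel A \<Otimes>\<^sub>M distr M borel B = distr M (borel \<Otimes>\<^sub>M borel) (\<lambda>x. (A x, B x))"
    using assms(3) M.indep_var_distribution_eq by blast+
  have N: "N.random_variable borel A'" "N.random_variable borel B'"
    "distr N borel A' \<Otimes>\<^sub>M distr N borel B' = distr N (borel \<Otimes>\<^sub>M borel) (\<lambda>x. (A' x, B' x))"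
    using assms(4) N.indep_var_distribution_eq by blast+
  have eq: "distr M (borel \<Otimes>\<^sub>M borel) (\<lambda>x. (A x, B x)) = distr N (borel \<Otimes>\<^sub>M borel) (\<lambda>x. (A' x, B' x))"
    using M(3) N(3) assms(5,6) by simp
  have mM: "(\<lambda>x. (A x, B x)) \<in> measurable M (borel \<Otimes>\<^sub>M borel)"
    by (intro measurable_Pair) (use M in auto)
  have mN: "(\<lambda>x. (A' x, B' x)) \<in> measurable N (borel \<Otimes>\<^sub>M borel)"
    by (intro measurable_Pair) (use N in auto)
  have "(\<integral>x. g (A x, B x) \<partial>M) = integral\<^sup>L (distr M (borel \<Otimes>\<^sub>M borel) (\<lambda>x. (A x, B x))) g"
    by (rule integral_distr[OF mM g, symmetric])
  also have "\<dots> = integral\<^sup>L (distr N (borel \<Otimes>\<^sub>M borel) (\<lambda>x. (A' x, B' x))) g" by (simp add: eq)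
  also have "\<dots> = (\<integral>x. g (A' x, B' x) \<partial>N)"
    by (rule integral_distr[OF mN g])
  finally show ?thesis .
qed

lemma indep_var_scale:
  fixes Z Zt :: "'b \<Rightarrow> real" and a b :: real
  assumes "prob_space N" "prob_space.indep_var N borel Z borel Zt"
  shows "prob_space.indep_var N borel (\<lambda>\<omega>. a * Z \<omega>) borel (\<lambda>\<omega>. b * Zt \<omega>)"
proof -
  interpret prob_space N by fact
  have "indep_var borel ((\<lambda>x. a * x) \<circ> Z) borel ((\<lambda>x. b * x) \<circ> Zt)"
  proof (rule indep_var_compose[OF assms(2)])
    show "((*) a) \<in> borel_measurable borel" by measurable
    show "((*) b) \<in> borel_measurable borel" by measurable
  qed
  then show ?thesis by (simp add: comp_def)
qed

lemma levy_indep: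
  assumes L: "sym_stable_levy M \<alpha> X" and uv: "0 < u" "u < v"
  shows "prob_space.indep_var M borel (\<lambda>\<omega>. X u \<omega> - X 0 \<omega>) borel (\<lambda>\<omega>. X v \<omega> - X u \<omega>)"
proof -
  interpret prob_space M using L by (simp add: sym_stable_levy_def)
  define ts :: "nat \<Rightarrow> real" where "ts = (\<lambda>i. if i = 0 then 0 else if i = 1 then u else v)"
  define Y where "Y = (\<lambda>i \<omega>. X (ts (Suc i)) \<omega> - X (ts i) \<omega>)"
  have "indep_vars (\<lambda>_. borel) Y {..<2}"
    using L uv unfolding sym_stable_levy_def Y_def
    apply (elim conjE)
    apply (drule spec[of _ ts], drule spec[of _ 2])
    by (auto simp: ts_def less_2_cases_iff)
  then have "indep_var (Pi\<^sub>M {0} (\<lambda>_. borel)) (\<lambda>\<omega>. restrict (\<lambda>i. Y i \<omega>) {0})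
      (Pi\<^sub>M {1} (\<lambda>_. borel)) (\<lambda>\<omega>. restrict (\<lambda>i. Y i \<omega>) {1})"
    by (rule indep_var_restrict) auto
  then have "indep_var borel ((\<lambda>f. f 0) \<circ> (\<lambda>\<omega>. restrict (\<lambda>i. Y i \<omega>) {0}))
     borel ((\<lambda>f. f 1) \<circ> (\<lambda>\<omega>. restrict (\<lambda>i. Y i \<omega>) {1}))"
    by (rule indep_var_compose) (auto intro: measurable_component_singleton)
  then show ?thesis by (simp add: comp_def Y_def ts_def)
qed

lemma (in prob_space) indep_var_swap:
  "indep_var S X T Y \<Longrightarrow> indep_var T Y S X"
proof -
  assume "indep_var S X T Y"
  then have h: "random_variable S X" "random_variable T Y"
    "sigma_sets (space M) {X -` A \<inter> space M |A. A \<in> sets S} \<subseteq> events"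
    "sigma_sets (space M) {Y -` A \<inter> space M |A. A \<in> sets T} \<subseteq> events"
    "\<forall>a\<in>sigma_sets (space M) {X -` A \<inter> space M |A. A \<in> sets S}.
       \<forall>b\<in>sigma_sets (space M) {Y -` A \<inter> space M |A. A \<in> sets T}. prob (a \<inter> b) = prob a * prob b"
    unfolding indep_var_eq indep_sets2_eq by blast+
  have "\<forall>b\<in>sigma_sets (space M) {Y -` A \<inter> space M |A. A \<in> sets T}.
       \<forall>a\<in>sigma_sets (space M) {X -` A \<inter> space M |A. A \<in> sets S}. prob (b \<inter> a) = prob b * prob a"
    using h(5) by (metis (no_types, lifting) Int_commute mult.commute)
  then show ?thesis using h(1-4) unfolding indep_var_eq indep_sets2_eq by blast
qed

lemma powr_le_iff2:
  fixes a x y :: real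
  assumes "0 < a" "0 \<le> x" "0 \<le> y"
  shows "x powr a \<le> y powr a \<longleftrightarrow> x \<le> y"
  using powr_mono2[of a x y] powr_less_mono2[of a y x] assms by (auto simp: not_le[symmetric])

locale setting = M: prob_space M + N: prob_space N
  for M :: "'a measure" and X :: "real \<Rightarrow> 'a \<Rightarrow> real"
    and N :: "'b measure" and Z Zt :: "'b \<Rightarrow> real" and \<alpha> :: real +
  assumes apos: "0 < \<alpha>"
    and levy: "sym_stable_levy M \<alpha> X"
    and Zm[measurable]: "Z \<in> borel_measurable N" and Ztm[measurable]: "Zt \<in> borel_measurable N"
    and ind: "prob_space.indep_var N borel Z borel Zt"
    and chZ: "\<And>u. char (distr N borel Z) u = complex_of_real (exp (- (\<bar>u\<bar> powr \<alpha>)))"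
    and chZt: "\<And>u. char (distr N borel Zt) u = complex_of_real (exp (- (\<bar>u\<bar> powr \<alpha>)))"
begin

lemma X0: "\<omega> \<in> space M \<Longrightarrow> X 0 \<omega> = 0"
  using levy by (simp add: sym_stable_levy_def)

lemma Xm: "0 \<le> t \<Longrightarrow> X t \<in> borel_measurable M"
  using levy by (simp add: sym_stable_levy_def)

lemma chX: "0 \<le> s \<Longrightarrow> s \<le> t \<Longrightarrow>
  char (distr M borel (\<lambda>\<omega>. X t \<omega> - X s \<omega>)) u = complex_of_real (exp (- (\<bar>u\<bar> powr \<alpha>) * (t - s)))"
  using levy by (simp add: sym_stable_levy_def)

lemma distrX:
  assumes "0 \<le> s" "s \<le> t" "W = Z \<or> W = Zt"
  shows "distr M borel (\<lambda>\<omega>. X t \<omega> - X s \<omega>) = distr N borel (\<lambda>\<omega>. (t - s) powr (1/\<alpha>) * W \<omega>)"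
proof (rule distr_scale_eq)
  show "prob_space N" "prob_space M" by unfold_locales
  show "W \<in> borel_measurable N" using assms by auto
  show "char (distr N borel W) u = complex_of_real (exp (- (\<bar>u\<bar> powr \<alpha>)))" for u
    using assms chZ chZt by auto
  show "(\<lambda>\<omega>. X t \<omega> - X s \<omega>) \<in> borel_measurable M"
    using Xm assms by (intro borel_measurable_diff) auto
qed (use assms chX apos in auto)

lemma distrZt: "distr N borel Zt = distr N borel Z"
  using distr_scale_eq[of N Z \<alpha> N Zt 1] chZ chZt apos by (simp add: N.prob_space_axioms)

lemma distr_negZ: "distr N borel (\<lambda>\<omega>. - Z \<omega>) = distr N borel Z"
  by (rule distr_neg_eq[OF N.prob_space_axioms Zm chZ])

lemma distr_negZt: "distr N borel (\<lambda>\<omega>. - Zt \<omega>) = distr N borel Zt"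
  by (rule distr_neg_eq[OF N.prob_space_axioms Ztm chZt])

lemma indN: "N.indep_var borel (\<lambda>\<omega>. a * Z \<omega>) borel (\<lambda>\<omega>. b * Zt \<omega>)"
  by (rule indep_var_scale[OF N.prob_space_axioms ind])

lemma sym1:
  assumes g: "(g :: real \<times> real \<Rightarrow> real) \<in> borel_measurable borel"
  shows "(\<integral>\<omega>. g (Z \<omega>, Zt \<omega>) \<partial>N) = (\<integral>\<omega>. g (- Z \<omega>, Zt \<omega>) \<partial>N)"
proof -
  have "(\<integral>\<omega>. g (1 * Z \<omega>, 1 * Zt \<omega>) \<partial>N) = (\<integral>\<omega>. g ((-1) * Z \<omega>, 1 * Zt \<omega>) \<partial>N)"
    by (rule indep_pair_integral_eq[OF N.prob_space_axioms N.prob_space_axioms indN indN])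
      (use distr_negZ g in \<open>auto simp: borel_prod\<close>)
  then show ?thesis by simp
qed

lemma sym2:
  assumes g: "(g :: real \<times> real \<Rightarrow> real) \<in> borel_measurable borel"
  shows "(\<integral>\<omega>. g (Z \<omega>, Zt \<omega>) \<partial>N) = (\<integral>\<omega>. g (Z \<omega>, - Zt \<omega>) \<partial>N)"
proof -
  have "(\<integral>\<omega>. g (1 * Z \<omega>, 1 * Zt \<omega>) \<partial>N) = (\<integral>\<omega>. g (1 * Z \<omega>, (-1) * Zt \<omega>) \<partial>N)"
    by (rule indep_pair_integral_eq[OF N.prob_space_axioms N.prob_space_axioms indN indN])
      (use distr_negZt g in \<open>auto simp: borel_prod\<close>)
  then show ?thesis by simp
qed

lemma swap:
  assumes g: "(g :: real \<times> real \<Rightarrow> real) \<in> borel_measurable borel"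
  shows "(\<integral>\<omega>. g (Z \<omega>, Zt \<omega>) \<partial>N) = (\<integral>\<omega>. g (Zt \<omega>, Z \<omega>) \<partial>N)"
  by (rule indep_pair_integral_eq[OF N.prob_space_axioms N.prob_space_axioms ind N.indep_var_swap[OF ind]])
      (use distrZt g in \<open>auto simp: borel_prod\<close>)

lemma Z_nz: "AE \<omega> in N. Z \<omega> \<noteq> 0"
proof -
  have "measure (distr N borel Z) {0} = 0"
    by (rule no_atom[OF real_distribution_distr_rv[OF N.prob_space_axioms Zm] apos chZ])
  then have "measure N {\<omega> \<in> space N. Z \<omega> = 0} = 0"
    by (subst (asm) measure_distr) (auto simp: vimage_def Int_def conj_commute)
  moreover have "{\<omega> \<in> space N. Z \<omega> = 0} \<in> sets N" by measurable
  ultimately have "{\<omega> \<in> space N. Z \<omega> = 0} \<in> null_sets N"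
    by (simp add: N.emeasure_eq_measure null_sets_def)
  from AE_not_in[OF this] show ?thesis by (rule AE_mp) (auto intro!: AE_I2)
qed

lemma Zt_nz: "AE \<omega> in N. Zt \<omega> \<noteq> 0"
proof -
  have "measure (distr N borel Zt) {0} = 0"
    by (rule no_atom[OF real_distribution_distr_rv[OF N.prob_space_axioms Ztm] apos chZt])
  then have "measure N {\<omega> \<in> space N. Zt \<omega> = 0} = 0"
    by (subst (asm) measure_distr) (auto simp: vimage_def Int_def conj_commute)
  moreover have "{\<omega> \<in> space N. Zt \<omega> = 0} \<in> sets N" by measurable
  ultimately have "{\<omega> \<in> space N. Zt \<omega> = 0} \<in> null_sets N"
    by (simp add: N.emeasure_eq_measure null_sets_def)
  from AE_not_in[OF this] show ?thesis by (rule AE_mp) (auto intro!: AE_I2)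
qed

end

definition Ee :: "real \<Rightarrow> real \<Rightarrow> real \<Rightarrow> real" where
  "Ee \<alpha> x y = \<bar>y / x\<bar> powr \<alpha> / (1 + \<bar>y / x\<bar> powr \<alpha>)"

lemma Ee_meas[measurable (raw)]:
  assumes [measurable]: "f \<in> borel_measurable M" "g \<in> borel_measurable M"
  shows "(\<lambda>x. Ee \<alpha> (f x) (g x)) \<in> borel_measurable M"
  unfolding Ee_def by measurable

lemma four_sum:
  fixes a b x y :: real
  assumes "0 < a" "0 < b" "x \<noteq> 0"
  shows "indicator {0..} (a * x) * indicator {0..} (a * x + b * y)
       + indicator {0..} (a * (-x)) * indicator {0..} (a * (-x) + b * y)
       + indicator {0..} (a * x) * indicator {0..} (a * x + b * (-y))
       + indicator {0..} (a * (-x)) * indicator {0..} (a * (-x) + b * (-y))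
       = (1::real) + indicator {..a * \<bar>x\<bar>} (b * \<bar>y\<bar>)"
proof -
  consider "x > 0" "y \<ge> 0" | "x > 0" "y < 0" | "x < 0" "y \<ge> 0" | "x < 0" "y < 0"
    using assms by linarith
  then show ?thesis
  proof cases
    case 1
    then have "a * x > 0" "b * y \<ge> 0" using assms by auto
    then show ?thesis using 1 by (auto simp: indicator_def)
  next
    case 2
    then have "a * x > 0" "b * y < 0" using assms by (auto simp: mult_pos_neg)
    then show ?thesis using 2 by (auto simp: indicator_def)
  next
    case 3
    then have "a * x < 0" "b * y \<ge> 0" using assms by (auto simp: mult_pos_neg)
    then show ?thesis using 3 by (auto simp: indicator_def)
  next
    case 4
    then have "a * x < 0" "b * y < 0" using assms by (auto simp: mult_pos_neg)
    then show ?thesis using 4 by (auto simp: indicator_def)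
  qed
qed

lemma Ee_iff:
  fixes \<alpha> u v x y :: real
  assumes "0 < \<alpha>" "0 < u" "u < v" "x \<noteq> 0"
  shows "(v - u) powr (1/\<alpha>) * \<bar>y\<bar> \<le> u powr (1/\<alpha>) * \<bar>x\<bar> \<longleftrightarrow> Ee \<alpha> x y \<le> u / v"
proof -
  have ax: "0 < \<bar>x\<bar> powr \<alpha>" using assms by simp
  have "(v - u) powr (1/\<alpha>) * \<bar>y\<bar> \<le> u powr (1/\<alpha>) * \<bar>x\<bar> \<longleftrightarrow>
      ((v - u) powr (1/\<alpha>) * \<bar>y\<bar>) powr \<alpha> \<le> (u powr (1/\<alpha>) * \<bar>x\<bar>) powr \<alpha>"
    using assms by (intro powr_le_iff2[symmetric]) auto
  also have "\<dots> \<longleftrightarrow> (v - u) * \<bar>y\<bar> powr \<alpha> \<le> u * \<bar>x\<bar> powr \<alpha>"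
    using assms by (simp add: powr_mult powr_powr)
  also have "\<dots> \<longleftrightarrow> (v - u) * (\<bar>y\<bar> powr \<alpha> / \<bar>x\<bar> powr \<alpha>) \<le> u"
    using ax by (simp add: divide_simps mult.commute)
  also have "\<dots> \<longleftrightarrow> Ee \<alpha> x y \<le> u / v"
  proof -
    define r where "r = \<bar>y\<bar> powr \<alpha> / \<bar>x\<bar> powr \<alpha>"
    have r0: "0 \<le> r" unfolding r_def by simp
    have "Ee \<alpha> x y = r / (1 + r)" unfolding Ee_def r_def by (simp add: abs_divide powr_divide)
    moreover have "r / (1 + r) \<le> u / v \<longleftrightarrow> (v - u) * r \<le> u"
      using r0 assms by (simp add: divide_simps algebra_simps add_pos_nonneg)
    ultimately show ?thesis unfolding r_def by simp
  qed
  finally show ?thesis .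
qed

abbreviation ind0 :: "real \<Rightarrow> real" where "ind0 \<equiv> indicator {0..}"

context setting begin

lemma single:
  assumes "0 \<le> s" "s \<le> t" and f: "(f :: real \<Rightarrow> real) \<in> borel_measurable borel"
  shows "(\<integral>\<omega>. f (X t \<omega> - X s \<omega>) \<partial>M) = (\<integral>\<omega>. f ((t - s) powr (1/\<alpha>) * Z \<omega>) \<partial>N)"
proof -
  have m: "(\<lambda>\<omega>. X t \<omega> - X s \<omega>) \<in> borel_measurable M"
    using Xm assms by (intro borel_measurable_diff) auto
  have m2: "(\<lambda>\<omega>. (t - s) powr (1/\<alpha>) * Z \<omega>) \<in> borel_measurable N" by measurable
  have "(\<integral>\<omega>. f (X t \<omega> - X s \<omega>) \<partial>M) = integral\<^sup>L (distr M borel (\<lambda>\<omega>. X t \<omega> - X s \<omega>)) f"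
    by (rule integral_distr[OF m f, symmetric])
  also have "\<dots> = integral\<^sup>L (distr N borel (\<lambda>\<omega>. (t - s) powr (1/\<alpha>) * Z \<omega>)) f"
    using distrX[of s t Z] assms by simp
  also have "\<dots> = (\<integral>\<omega>. f ((t - s) powr (1/\<alpha>) * Z \<omega>) \<partial>N)"
    by (rule integral_distr[OF m2 f])
  finally show ?thesis .
qed

lemma negZ_int:
  assumes f: "(f :: real \<Rightarrow> real) \<in> borel_measurable borel"
  shows "(\<integral>\<omega>. f (- Z \<omega>) \<partial>N) = (\<integral>\<omega>. f (Z \<omega>) \<partial>N)"
proof -
  have m: "(\<lambda>\<omega>. - Z \<omega>) \<in> borel_measurable N" by measurable
  have "(\<integral>\<omega>. f (- Z \<omega>) \<partial>N) = integral\<^sup>L (distr N borel (\<lambda>\<omega>. - Z \<omega>)) f"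
    by (rule integral_distr[OF m f, symmetric])
  also have "\<dots> = integral\<^sup>L (distr N borel Z) f" by (simp add: distr_negZ)
  also have "\<dots> = (\<integral>\<omega>. f (Z \<omega>) \<partial>N)" by (rule integral_distr[OF Zm f])
  finally show ?thesis .
qed

lemma half:
  assumes "0 < t"
  shows "(\<integral>\<omega>. ind0 (X t \<omega>) \<partial>M) = (1/2 :: real)"
proof -
  define c where "c = t powr (1/\<alpha>)"
  have c0: "0 < c" unfolding c_def using assms by simp
  have "(\<integral>\<omega>. ind0 (X t \<omega>) \<partial>M) = (\<integral>\<omega>. ind0 (X t \<omega> - X 0 \<omega>) \<partial>M)"
    by (intro Bochner_Integration.integral_cong) (auto simp: X0)
  also have "\<dots> = (\<integral>\<omega>. ind0 (c * Z \<omega>) \<partial>N)"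
    using single[of 0 t "indicator {0..}"] assms unfolding c_def by simp
  finally have 1: "(\<integral>\<omega>. ind0 (X t \<omega>) \<partial>M) = (\<integral>\<omega>. ind0 (c * Z \<omega>) \<partial>N)" .
  have 2: "(\<integral>\<omega>. ind0 (c * Z \<omega>) \<partial>N) = (\<integral>\<omega>. ind0 (c * (- Z \<omega>)) \<partial>N)"
    using negZ_int[of "\<lambda>z. ind0 (c * z)"] by simp
  have int: "integrable N (\<lambda>\<omega>. ind0 (c * Z \<omega>) :: real)"
    "integrable N (\<lambda>\<omega>. ind0 (c * (- Z \<omega>)) :: real)"
    by (auto intro!: N.integrable_const_bound[where B=1] simp: indicator_def)
  have "(\<integral>\<omega>. ind0 (c * Z \<omega>) \<partial>N) + (\<integral>\<omega>. ind0 (c * (- Z \<omega>)) \<partial>N)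
      = (\<integral>\<omega>. ind0 (c * Z \<omega>) + ind0 (c * (- Z \<omega>)) \<partial>N)"
    using int by simp
  also have "\<dots> = (\<integral>\<omega>. 1 \<partial>N)"
  proof (rule integral_cong_AE)
    show "AE \<omega> in N. ind0 (c * Z \<omega>) + ind0 (c * (- Z \<omega>)) = (1::real)"
      using Z_nz by eventually_elim (use c0 in \<open>auto simp: indicator_def zero_le_mult_iff mult_le_0_iff\<close>)
  qed auto
  also have "\<dots> = 1" by (simp add: N.prob_space)
  finally show ?thesis using 1 2 by simp
qed

lemma pair:
  assumes "0 < u" "u < v" and g: "(g :: real \<times> real \<Rightarrow> real) \<in> borel_measurable borel"
  shows "(\<integral>\<omega>. g (X u \<omega>, X v \<omega> - X u \<omega>) \<partial>M)
       = (\<integral>\<omega>. g (u powr (1/\<alpha>) * Z \<omega>, (v - u) powr (1/\<alpha>) * Zt \<omega>) \<partial>N)"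
proof -
  have "(\<integral>\<omega>. g (X u \<omega>, X v \<omega> - X u \<omega>) \<partial>M) = (\<integral>\<omega>. g (X u \<omega> - X 0 \<omega>, X v \<omega> - X u \<omega>) \<partial>M)"
    by (intro Bochner_Integration.integral_cong) (auto simp: X0)
  also have "\<dots> = (\<integral>\<omega>. g (u powr (1/\<alpha>) * Z \<omega>, (v - u) powr (1/\<alpha>) * Zt \<omega>) \<partial>N)"
  proof (rule indep_pair_integral_eq[OF M.prob_space_axioms N.prob_space_axioms levy_indep[OF levy assms(1,2)] indN])
    show "distr M borel (\<lambda>\<omega>. X u \<omega> - X 0 \<omega>) = distr N borel (\<lambda>\<omega>. u powr (1/\<alpha>) * Z \<omega>)"
      using distrX[of 0 u Z] assms by simp
    show "distr M borel (\<lambda>\<omega>. X v \<omega> - X u \<omega>) = distr N borel (\<lambda>\<omega>. (v - u) powr (1/\<alpha>) * Zt \<omega>)"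
      using distrX[of u v Zt] assms by simp
  qed (use g in \<open>simp add: borel_prod\<close>)
  finally show ?thesis .
qed

lemma pval:
  assumes uv: "0 < u" "u < v"
  shows "(\<integral>\<omega>. ind0 (X u \<omega>) * ind0 (X v \<omega>) \<partial>M)
       = 1/4 + 1/4 * (\<integral>\<omega>. indicator {..u/v} (Ee \<alpha> (Z \<omega>) (Zt \<omega>)) \<partial>N)"
proof -
  define a where "a = u powr (1/\<alpha>)"
  define b where "b = (v - u) powr (1/\<alpha>)"
  have a0: "0 < a" and b0: "0 < b" using uv by (auto simp: a_def b_def)
  define G where "G = (\<lambda>p::real\<times>real. ind0 (a * fst p) * ind0 (a * fst p + b * snd p))"
  have "G \<in> borel_measurable (borel \<Otimes>\<^sub>M borel)" unfolding G_def by measurable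
  then have Gm[measurable]: "G \<in> borel_measurable borel" by (simp add: borel_prod)
  have Gb: "\<bar>G p\<bar> \<le> 1" for p by (simp add: G_def indicator_def)
  have intG: "integrable N (\<lambda>\<omega>. G (f1 (Z \<omega>), f2 (Zt \<omega>)))"
    if "f1 \<in> borel_measurable borel" "f2 \<in> borel_measurable borel" for f1 f2 :: "real \<Rightarrow> real"
    using that Gb by (intro N.integrable_const_bound[where B=1]) auto
  have "(\<integral>\<omega>. ind0 (X u \<omega>) * ind0 (X v \<omega>) \<partial>M)
      = (\<integral>\<omega>. (\<lambda>p. ind0 (fst p) * ind0 (fst p + snd p)) (X u \<omega>, X v \<omega> - X u \<omega>) \<partial>M)"
    by simp
  also have "\<dots> = (\<integral>\<omega>. G (Z \<omega>, Zt \<omega>) \<partial>N)"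
  proof -
    have "(\<lambda>p::real\<times>real. ind0 (fst p) * ind0 (fst p + snd p)) \<in> borel_measurable (borel \<Otimes>\<^sub>M borel)"
      by measurable
    then have "(\<lambda>p::real\<times>real. ind0 (fst p) * ind0 (fst p + snd p)) \<in> borel_measurable borel"
      by (simp add: borel_prod)
    then show ?thesis unfolding G_def a_def b_def by (subst pair[OF uv]) simp_all
  qed
  finally have I: "(\<integral>\<omega>. ind0 (X u \<omega>) * ind0 (X v \<omega>) \<partial>M) = (\<integral>\<omega>. G (Z \<omega>, Zt \<omega>) \<partial>N)" .
  have s1: "(\<integral>\<omega>. G (Z \<omega>, Zt \<omega>) \<partial>N) = (\<integral>\<omega>. G (- Z \<omega>, Zt \<omega>) \<partial>N)"
    by (rule sym1[OF Gm])
  have s2: "(\<integral>\<omega>. G (Z \<omega>, Zt \<omega>) \<partial>N) = (\<integral>\<omega>. G (Z \<omega>, - Zt \<omega>) \<partial>N)"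
    by (rule sym2[OF Gm])
  have s3: "(\<integral>\<omega>. G (- Z \<omega>, Zt \<omega>) \<partial>N) = (\<integral>\<omega>. G (- Z \<omega>, - Zt \<omega>) \<partial>N)"
  proof -
    have "(\<lambda>p::real\<times>real. G (- fst p, snd p)) \<in> borel_measurable (borel \<Otimes>\<^sub>M borel)"
      using Gm by (simp add: borel_prod[symmetric]) measurable
    then show ?thesis using sym2[of "\<lambda>p. G (- fst p, snd p)"] by (simp add: borel_prod)
  qed
  have "4 * (\<integral>\<omega>. G (Z \<omega>, Zt \<omega>) \<partial>N)
      = (\<integral>\<omega>. G (Z \<omega>, Zt \<omega>) \<partial>N) + (\<integral>\<omega>. G (- Z \<omega>, Zt \<omega>) \<partial>N)
        + (\<integral>\<omega>. G (Z \<omega>, - Zt \<omega>) \<partial>N) + (\<integral>\<omega>. G (- Z \<omega>, - Zt \<omega>) \<partial>N)"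
    using s1 s2 s3 by simp
  also have "\<dots> = (\<integral>\<omega>. G (Z \<omega>, Zt \<omega>) + G (- Z \<omega>, Zt \<omega>) + G (Z \<omega>, - Zt \<omega>) + G (- Z \<omega>, - Zt \<omega>) \<partial>N)"
    using intG[of "\<lambda>x. x" "\<lambda>x. x"] intG[of "\<lambda>x. - x" "\<lambda>x. x"] intG[of "\<lambda>x. x" "\<lambda>x. - x"]
      intG[of "\<lambda>x. - x" "\<lambda>x. - x"]
    by (simp add: Bochner_Integration.integral_add)
  also have "\<dots> = (\<integral>\<omega>. 1 + indicator {..u/v} (Ee \<alpha> (Z \<omega>) (Zt \<omega>)) \<partial>N)"
  proof (rule integral_cong_AE)
    show "AE \<omega> in N. G (Z \<omega>, Zt \<omega>) + G (- Z \<omega>, Zt \<omega>) + G (Z \<omega>, - Zt \<omega>) + G (- Z \<omega>, - Zt \<omega>)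
        = 1 + indicator {..u/v} (Ee \<alpha> (Z \<omega>) (Zt \<omega>))"
      using Z_nz
    proof eventually_elim
      case (elim \<omega>)
      have "G (Z \<omega>, Zt \<omega>) + G (- Z \<omega>, Zt \<omega>) + G (Z \<omega>, - Zt \<omega>) + G (- Z \<omega>, - Zt \<omega>)
          = 1 + indicator {..a * \<bar>Z \<omega>\<bar>} (b * \<bar>Zt \<omega>\<bar>)"
        using four_sum[OF a0 b0 elim, of "Zt \<omega>"] by (simp add: G_def)
      also have "\<dots> = 1 + indicator {..u/v} (Ee \<alpha> (Z \<omega>) (Zt \<omega>))"
        using Ee_iff[OF apos uv elim, of "Zt \<omega>"] unfolding a_def b_def
        by (simp add: indicator_def)
      finally show ?case .
    qed
  qed (simp_all, measurable)
  also have "\<dots> = 1 + (\<integral>\<omega>. indicator {..u/v} (Ee \<alpha> (Z \<omega>) (Zt \<omega>)) \<partial>N)"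
  proof -
    have "integrable N (\<lambda>\<omega>. indicator {..u/v} (Ee \<alpha> (Z \<omega>) (Zt \<omega>)) :: real)"
      by (intro N.integrable_const_bound[where B=1]) (auto simp: indicator_def Ee_def)
    then show ?thesis by (simp add: Bochner_Integration.integral_add N.prob_space)
  qed
  finally show ?thesis using I by simp
qed

end

lemma dyadic_lim:
  fixes t :: real
  shows "(\<lambda>n::nat. (real_of_int \<lfloor>t * 2^n\<rfloor> + 1) / 2^n) \<longlonglongrightarrow> t"
    and "\<And>n::nat. t < (real_of_int \<lfloor>t * 2^n\<rfloor> + 1) / 2^n"
proof -
  show lt: "t < (real_of_int \<lfloor>t * 2^n\<rfloor> + 1) / 2^n" for n :: nat
    by (simp add: pos_less_divide_eq)
  have le: "(real_of_int \<lfloor>t * 2^n\<rfloor> + 1) / 2^n \<le> t + 1 / 2^n" for n :: nat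
    by (simp add: divide_simps)
  have "(\<lambda>n::nat. t + 1 / 2^n) \<longlonglongrightarrow> t + 0"
    by (intro tendsto_intros LIMSEQ_divide_realpow_zero) (simp_all add: LIMSEQ_inverse_realpow_zero)
  then have up: "(\<lambda>n::nat. t + 1 / 2^n) \<longlonglongrightarrow> t" by simp
  show "(\<lambda>n::nat. (real_of_int \<lfloor>t * 2^n\<rfloor> + 1) / 2^n) \<longlonglongrightarrow> t"
    by (rule tendsto_sandwich[of "\<lambda>n. t" _ _ "\<lambda>n. t + 1/2^n"]) (use lt le up in \<open>auto intro!: always_eventually less_imp_le\<close>)
qed

context setting begin

lemma right_cont: "\<omega> \<in> space M \<Longrightarrow> 0 \<le> t \<Longrightarrow> ((\<lambda>s. X s \<omega>) \<longlongrightarrow> X t \<omega>) (at_right t)"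
  using levy by (simp add: sym_stable_levy_def continuous_within)

lemma Xjoint: "(\<lambda>p. X (max (fst p) 0) (snd p)) \<in> borel_measurable ((lborel :: real measure) \<Otimes>\<^sub>M M)"
proof (rule borel_measurable_LIMSEQ_real)
  define s where "s = (\<lambda>(n::nat) (i::int). (max (real_of_int i) 0 + 1) / 2^n)"
  have s0: "0 \<le> s n i" for n i by (simp add: s_def)
  define Y where "Y = (\<lambda>n (p :: real \<times> 'a). X (s n \<lfloor>max (fst p) 0 * 2^n\<rfloor>) (snd p))"
  show "Y n \<in> borel_measurable (lborel \<Otimes>\<^sub>M M)" for n
    unfolding Y_def
  proof (rule measurable_compose_countable[where f="\<lambda>i p. X (s n i) (snd p)"])
    show "(\<lambda>p. X (s n i) (snd p)) \<in> borel_measurable (lborel \<Otimes>\<^sub>M M)" for i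
      using Xm[OF s0[of n i]] by measurable
    show "(\<lambda>p::real\<times>'a. \<lfloor>max (fst p) 0 * 2^n\<rfloor>) \<in> measurable (lborel \<Otimes>\<^sub>M M) (count_space UNIV)"
      by measurable
  qed
  fix p :: "real \<times> 'a" assume p: "p \<in> space (lborel \<Otimes>\<^sub>M M)"
  define t where "t = max (fst p) 0"
  have t0: "0 \<le> t" by (simp add: t_def)
  have \<omega>: "snd p \<in> space M" using p by (auto simp: space_pair_measure)
  have floor0: "0 \<le> \<lfloor>t * 2^n\<rfloor>" for n :: nat using t0 by simp
  have "Y n p = X ((real_of_int \<lfloor>t * 2^n\<rfloor> + 1) / 2^n) (snd p)" for n
    unfolding Y_def s_def t_def[symmetric] using floor0[of n] by simp
  moreover have "(\<lambda>n. X ((real_of_int \<lfloor>t * 2^n\<rfloor> + 1) / 2^n) (snd p)) \<longlonglongrightarrow> X t (snd p)"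
  proof (rule filterlim_compose[OF right_cont[OF \<omega> t0]])
    show "filterlim (\<lambda>n::nat. (real_of_int \<lfloor>t * 2^n\<rfloor> + 1) / 2^n) (at_right t) sequentially"
      by (rule tendsto_imp_filterlim_at_right[OF dyadic_lim(1)]) (simp add: dyadic_lim(2))
  qed
  ultimately show "(\<lambda>n. Y n p) \<longlonglongrightarrow> X (max (fst p) 0) (snd p)"
    unfolding t_def by simp
qed

end

context setting begin

lemma fubM:
  assumes "0 \<le> s"
  shows "(\<integral>\<omega>. occ_time X T \<omega> * ind0 (X s \<omega>) \<partial>M)
       = (\<integral>t. indicator {0..T} t * (\<integral>\<omega>. ind0 (X t \<omega>) * ind0 (X s \<omega>) \<partial>M) \<partial>lborel)"
proof -
  interpret P: pair_sigma_finite "lborel :: real measure" M ..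
  define f where "f = (\<lambda>(t::real) \<omega>. indicator {0..T} t * (ind0 (X t \<omega>) * ind0 (X s \<omega>)))"
  have f_alt: "f t \<omega> = indicator {0..T} t * ind0 (X (max t 0) \<omega>) * ind0 (X s \<omega>)" for t \<omega>
    by (auto simp: f_def indicator_def max_def)
  have [measurable]: "X s \<in> borel_measurable M" using Xm[OF assms] .
  have Xj[measurable]: "(\<lambda>p. X (max (fst p) 0) (snd p)) \<in> borel_measurable (lborel \<Otimes>\<^sub>M M)"
    by (rule Xjoint)
  have fm: "case_prod f \<in> borel_measurable (lborel \<Otimes>\<^sub>M M)"
  proof -
    have "(\<lambda>p. indicator {0..T} (fst p) * ind0 (X (max (fst p) 0) (snd p)) * ind0 (X s (snd p)))
        \<in> borel_measurable (lborel \<Otimes>\<^sub>M M)" by measurable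
    then show ?thesis by (simp add: f_alt case_prod_beta')
  qed
  have int: "integrable (lborel \<Otimes>\<^sub>M M) (case_prod f)"
  proof (rule integrableI_bounded_set[where A="{0..T} \<times> space M" and B=1])
    show "{0..T} \<times> space M \<in> sets (lborel \<Otimes>\<^sub>M M)" by (intro pair_measureI) auto
    show "emeasure (lborel \<Otimes>\<^sub>M M) ({0..T} \<times> space M) < \<infinity>"
      by (subst M.emeasure_pair_measure_Times) (auto simp: M.emeasure_space_1 emeasure_lborel_Icc_eq)
    show "AE x in lborel \<Otimes>\<^sub>M M. x \<in> {0..T} \<times> space M \<longrightarrow> norm (case_prod f x) \<le> 1"
      by (auto simp: f_def indicator_def)
    show "AE x in lborel \<Otimes>\<^sub>M M. x \<notin> {0..T} \<times> space M \<longrightarrow> case_prod f x = 0"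
      by (rule AE_I2) (auto simp: f_def space_pair_measure indicator_def)
  qed (rule fm)
  have "(\<integral>\<omega>. occ_time X T \<omega> * ind0 (X s \<omega>) \<partial>M) = (\<integral>\<omega>. (\<integral>t. f t \<omega> \<partial>lborel) \<partial>M)"
    by (intro Bochner_Integration.integral_cong)
      (simp_all add: f_def occ_time_def set_lebesgue_integral_def mult.assoc[symmetric])
  also have "\<dots> = (\<integral>t. (\<integral>\<omega>. f t \<omega> \<partial>M) \<partial>lborel)"
    by (rule P.Fubini_integral[OF int])
  also have "\<dots> = (\<integral>t. indicator {0..T} t * (\<integral>\<omega>. ind0 (X t \<omega>) * ind0 (X s \<omega>) \<partial>M) \<partial>lborel)"
    by (simp add: f_def)
  finally show ?thesis .
qed

end

lemma Ee_range: "0 \<le> Ee \<alpha> x y" "Ee \<alpha> x y < 1"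
proof -
  have r: "0 \<le> \<bar>y / x\<bar> powr \<alpha>" by simp
  then show "0 \<le> Ee \<alpha> x y" unfolding Ee_def by simp
  have "\<And>r::real. 0 \<le> r \<Longrightarrow> r / (1 + r) < 1" by (simp add: divide_simps)
  then show "Ee \<alpha> x y < 1" unfolding Ee_def using r by blast
qed

definition Lfun :: "real \<Rightarrow> real \<Rightarrow> real \<Rightarrow> real" where
  "Lfun T u e = (if e = 0 then T else min T (u / e)) - u * e"

lemma Lfun_meas[measurable (raw)]:
  assumes [measurable]: "f \<in> borel_measurable M"
  shows "(\<lambda>x. Lfun T u (f x)) \<in> borel_measurable M"
  unfolding Lfun_def by measurable

lemma inner_L:
  fixes T u e :: real
  assumes "0 < u" "u \<le> T" "0 \<le> e" "e < 1"
  shows "(\<integral>t. (indicator {0..T} t :: real) * (if e \<le> min u t / max u t then 1 else 0) \<partial>lborel) = Lfun T u e"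
proof (cases "e = 0")
  case True
  have eq: "(\<lambda>t. indicator {0..T} t * (if e \<le> min u t / max u t then 1 else 0)) = (indicator {0..T} :: real \<Rightarrow> real)"
    using True assms by (auto simp: indicator_def min_def max_def)
  show ?thesis unfolding eq using True assms by (simp add: Lfun_def)
next
  case False
  then have e0: "0 < e" using assms by simp
  have ue: "u * e \<le> u" using assms by (simp add: mult_left_le)
  have ue2: "u \<le> u / e" using assms e0 by (simp add: le_divide_eq)
  have "indicator {0..T} t * (if e \<le> min u t / max u t then 1 else 0) = (indicator {u * e..min T (u / e)} t :: real)" for t
  proof (cases "t \<le> u")
    case True
    then have "min u t / max u t = t / u" by simp
    moreover have "e \<le> t / u \<longleftrightarrow> u * e \<le> t" using assms by (simp add: le_divide_eq mult.commute)
    moreover have key: "u * e \<le> t \<Longrightarrow> 0 \<le> t" using assms e0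
      by (metis less_eq_real_def mult_pos_pos order_trans)
    ultimately show ?thesis using True assms e0 ue ue2
      by (auto simp: indicator_def dest: key)
  next
    case False
    then have "min u t / max u t = u / t" by simp
    moreover have "e \<le> u / t \<longleftrightarrow> t \<le> u / e" using assms e0 False
      by (simp add: le_divide_eq divide_le_eq mult.commute)
    moreover have h: "u * e \<le> t" "0 \<le> t" using False ue assms by linarith+
    ultimately show ?thesis using False assms e0 ue ue2
      by (auto simp: indicator_def) (use h in linarith)+
  qed
  then have "(\<integral>t. (indicator {0..T} t :: real) * (if e \<le> min u t / max u t then 1 else 0) \<partial>lborel)
      = (\<integral>t. (indicator {u * e..min T (u / e)} t :: real) \<partial>lborel)" by simp
  also have "\<dots> = measure lborel {u * e..min T (u / e)}" by simp
  also have "\<dots> = min T (u / e) - u * e"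
  proof -
    have "u * e \<le> T" "u * e \<le> u / e" using ue ue2 assms by linarith+
    then show ?thesis by simp
  qed
  finally show ?thesis using False by (simp add: Lfun_def)
qed

lemma Lfun_bound:
  fixes T u e :: real
  assumes "0 < u" "u \<le> T" "0 \<le> e" "e < 1"
  shows "0 \<le> Lfun T u e \<and> Lfun T u e \<le> T"
proof (cases "e = 0")
  case True then show ?thesis using assms by (simp add: Lfun_def)
next
  case False
  then have e0: "0 < e" using assms by simp
  have ue: "u * e \<le> u" using assms by (simp add: mult_left_le)
  have ue2: "u \<le> u / e" using assms e0 by (simp add: le_divide_eq)
  have "u * e \<le> T" using ue assms by linarith
  moreover have "u * e \<le> u / e" using ue ue2 by linarith
  ultimately have "u * e \<le> min T (u / e)" by simp
  moreover have "min T (u / e) \<le> T" by simp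
  moreover have "0 \<le> u * e" using assms by simp
  ultimately show ?thesis using False by (simp add: Lfun_def)
qed

context setting begin

lemma pgen:
  assumes "0 < u" "0 < t"
  shows "(\<integral>\<omega>. ind0 (X t \<omega>) * ind0 (X u \<omega>) \<partial>M)
    = (\<integral>\<omega>. 1/4 + 1/4 * (if Ee \<alpha> (Z \<omega>) (Zt \<omega>) \<le> min u t / max u t then 1 else 0) \<partial>N)"
proof -
  have R: "(\<integral>\<omega>. (1/4::real) + 1/4 * (if Ee \<alpha> (Z \<omega>) (Zt \<omega>) \<le> c then 1 else 0) \<partial>N)
      = 1/4 + 1/4 * (\<integral>\<omega>. indicator {..c} (Ee \<alpha> (Z \<omega>) (Zt \<omega>)) \<partial>N)" for c
  proof -
    have "integrable N (\<lambda>\<omega>. indicator {..c} (Ee \<alpha> (Z \<omega>) (Zt \<omega>)) :: real)"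
      by (intro N.integrable_const_bound[where B=1]) (auto simp: indicator_def)
    moreover have "(\<lambda>\<omega>. (1/4::real) + 1/4 * (if Ee \<alpha> (Z \<omega>) (Zt \<omega>) \<le> c then 1 else 0))
      = (\<lambda>\<omega>. 1/4 + 1/4 * indicator {..c} (Ee \<alpha> (Z \<omega>) (Zt \<omega>)))"
      by (auto simp: indicator_def)
    ultimately show ?thesis
      by (simp add: Bochner_Integration.integral_add N.prob_space del: integral_mult_right_zero)
  qed
  consider "u < t" | "t < u" | "t = u" by linarith
  then show ?thesis
  proof cases
    case 1
    then show ?thesis using pval[OF assms(1) 1] R[of "u/t"] by (simp add: mult.commute)
  next
    case 2
    then show ?thesis using pval[OF assms(2) 2] R[of "t/u"] by simp
  next
    case 3
    have "(\<integral>\<omega>. ind0 (X t \<omega>) * ind0 (X u \<omega>) \<partial>M) = (\<integral>\<omega>. ind0 (X t \<omega>) \<partial>M)"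
      using 3 by (intro Bochner_Integration.integral_cong) (auto simp: indicator_def)
    also have "\<dots> = 1/2" by (rule half[OF assms(2)])
    finally show ?thesis using 3 assms Ee_range by (simp add: less_imp_le N.prob_space)
  qed
qed

lemma fubN:
  assumes "0 < u" "u \<le> T"
  shows "(\<integral>t. indicator {0..T} t * (\<integral>\<omega>. 1/4 + 1/4 * (if Ee \<alpha> (Z \<omega>) (Zt \<omega>) \<le> min u t / max u t then 1 else 0) \<partial>N) \<partial>lborel)
    = (\<integral>\<omega>. T/4 + 1/4 * Lfun T u (Ee \<alpha> (Z \<omega>) (Zt \<omega>)) \<partial>N)"
proof -
  interpret P: pair_sigma_finite "lborel :: real measure" N ..
  define f where "f = (\<lambda>(t::real) \<omega>. indicator {0..T} t * (1/4 + 1/4 * (if Ee \<alpha> (Z \<omega>) (Zt \<omega>) \<le> min u t / max u t then 1 else 0)) :: real)"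
  have fm: "case_prod f \<in> borel_measurable (lborel \<Otimes>\<^sub>M N)"
    unfolding f_def by measurable
  have int: "integrable (lborel \<Otimes>\<^sub>M N) (case_prod f)"
  proof (rule integrableI_bounded_set[where A="{0..T} \<times> space N" and B=1])
    show "{0..T} \<times> space N \<in> sets (lborel \<Otimes>\<^sub>M N)" by (intro pair_measureI) auto
    show "emeasure (lborel \<Otimes>\<^sub>M N) ({0..T} \<times> space N) < \<infinity>"
      by (subst N.emeasure_pair_measure_Times) (auto simp: N.emeasure_space_1 emeasure_lborel_Icc_eq)
    show "AE x in lborel \<Otimes>\<^sub>M N. x \<in> {0..T} \<times> space N \<longrightarrow> norm (case_prod f x) \<le> 1"
      by (auto simp: f_def indicator_def)
    show "AE x in lborel \<Otimes>\<^sub>M N. x \<notin> {0..T} \<times> space N \<longrightarrow> case_prod f x = 0"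
      by (rule AE_I2) (auto simp: f_def space_pair_measure indicator_def)
  qed (rule fm)
  have "(\<integral>t. indicator {0..T} t * (\<integral>\<omega>. 1/4 + 1/4 * (if Ee \<alpha> (Z \<omega>) (Zt \<omega>) \<le> min u t / max u t then 1 else 0) \<partial>N) \<partial>lborel)
      = (\<integral>t. (\<integral>\<omega>. f t \<omega> \<partial>N) \<partial>lborel)"
    by (simp add: f_def)
  also have "\<dots> = (\<integral>\<omega>. (\<integral>t. f t \<omega> \<partial>lborel) \<partial>N)"
    by (rule P.Fubini_integral[OF int, symmetric])
  also have "\<dots> = (\<integral>\<omega>. T/4 + 1/4 * Lfun T u (Ee \<alpha> (Z \<omega>) (Zt \<omega>)) \<partial>N)"
  proof (rule Bochner_Integration.integral_cong[OF refl])
    fix \<omega>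
    define e where "e = Ee \<alpha> (Z \<omega>) (Zt \<omega>)"
    have e: "0 \<le> e" "e < 1" unfolding e_def using Ee_range by auto
    have "f t \<omega> = 1/4 * indicator {0..T} t + 1/4 * (indicator {0..T} t * (if e \<le> min u t / max u t then 1 else 0))" for t
      by (simp add: f_def e_def algebra_simps)
    then have "(\<integral>t. f t \<omega> \<partial>lborel) = (\<integral>t. 1/4 * indicator {0..T} t + 1/4 * (indicator {0..T} t * (if e \<le> min u t / max u t then 1 else 0)) \<partial>lborel)"
      by simp
    also have "\<dots> = 1/4 * (\<integral>t. indicator {0..T} t \<partial>lborel) + 1/4 * (\<integral>t. indicator {0..T} t * (if e \<le> min u t / max u t then 1 else 0) \<partial>lborel)"
    proof (subst Bochner_Integration.integral_add)
      show "integrable lborel (\<lambda>t. 1/4 * indicator {0..T} t :: real)"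
        by (intro integrable_mult_right integrableI_bounded_set[where A="{0..T}" and B=1])
          (auto simp: indicator_def emeasure_lborel_Icc_eq)
      show "integrable lborel (\<lambda>t. 1/4 * (indicator {0..T} t * (if e \<le> min u t / max u t then 1 else 0)) :: real)"
        by (intro integrable_mult_right integrableI_bounded_set[where A="{0..T}" and B=1])
          (auto simp: indicator_def emeasure_lborel_Icc_eq)
    qed simp
    also have "\<dots> = T/4 + 1/4 * Lfun T u e"
      using inner_L[OF assms e] assms by simp
    finally show "(\<integral>t. f t \<omega> \<partial>lborel) = T/4 + 1/4 * Lfun T u (Ee \<alpha> (Z \<omega>) (Zt \<omega>))"
      unfolding e_def .
  qed
  finally show ?thesis .
qed

end

context setting begin

lemma termk:
  assumes "0 < u" "u \<le> T"
  shows "(\<integral>\<omega>. occ_time X T \<omega> * ind0 (X u \<omega>) \<partial>M) = T/4 + 1/4 * (\<integral>\<omega>. Lfun T u (Ee \<alpha> (Z \<omega>) (Zt \<omega>)) \<partial>N)"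
proof -
  have "(\<integral>\<omega>. occ_time X T \<omega> * ind0 (X u \<omega>) \<partial>M)
      = (\<integral>t. indicator {0..T} t * (\<integral>\<omega>. ind0 (X t \<omega>) * ind0 (X u \<omega>) \<partial>M) \<partial>lborel)"
    using assms by (intro fubM) auto
  also have "\<dots> = (\<integral>t. indicator {0..T} t * (\<integral>\<omega>. 1/4 + 1/4 * (if Ee \<alpha> (Z \<omega>) (Zt \<omega>) \<le> min u t / max u t then 1 else 0) \<partial>N) \<partial>lborel)"
  proof (rule integral_discrete_difference[where X="{0}"])
    fix t :: real assume "t \<notin> {0}"
    then show "indicator {0..T} t * (\<integral>\<omega>. ind0 (X t \<omega>) * ind0 (X u \<omega>) \<partial>M)
      = indicator {0..T} t * (\<integral>\<omega>. 1/4 + 1/4 * (if Ee \<alpha> (Z \<omega>) (Zt \<omega>) \<le> min u t / max u t then 1 else 0) \<partial>N)"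
      using pgen[OF assms(1), of t] by (cases "0 < t") (auto simp: indicator_def)
  qed auto
  also have "\<dots> = (\<integral>\<omega>. T/4 + 1/4 * Lfun T u (Ee \<alpha> (Z \<omega>) (Zt \<omega>)) \<partial>N)"
    by (rule fubN[OF assms])
  also have "\<dots> = T/4 + 1/4 * (\<integral>\<omega>. Lfun T u (Ee \<alpha> (Z \<omega>) (Zt \<omega>)) \<partial>N)"
  proof -
    have "integrable N (\<lambda>\<omega>. Lfun T u (Ee \<alpha> (Z \<omega>) (Zt \<omega>)))"
      using Lfun_bound[OF assms Ee_range] by (intro N.integrable_const_bound[where B=T]) auto
    then show ?thesis by (simp add: N.prob_space)
  qed
  finally show ?thesis .
qed

lemma term1:
  assumes "0 \<le> T"
  shows "(\<integral>\<omega>. occ_time X T \<omega> * ind0 (X 0 \<omega>) \<partial>M) = T/2"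
proof -
  have "(\<integral>\<omega>. occ_time X T \<omega> * ind0 (X 0 \<omega>) \<partial>M)
      = (\<integral>t. indicator {0..T} t * (\<integral>\<omega>. ind0 (X t \<omega>) * ind0 (X 0 \<omega>) \<partial>M) \<partial>lborel)"
    by (intro fubM) auto
  also have "\<dots> = (\<integral>t. indicator {0..T} t * (1/2) \<partial>lborel)"
  proof (rule integral_discrete_difference[where X="{0}"])
    fix t :: real assume "t \<notin> {0}"
    moreover have "(\<integral>\<omega>. ind0 (X t \<omega>) * ind0 (X 0 \<omega>) \<partial>M) = (\<integral>\<omega>. ind0 (X t \<omega>) \<partial>M)"
      by (intro Bochner_Integration.integral_cong) (auto simp: X0)
    ultimately show "indicator {0..T} t * (\<integral>\<omega>. ind0 (X t \<omega>) * ind0 (X 0 \<omega>) \<partial>M) = indicator {0..T} t * (1/2)"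
      using half[of t] by (cases "0 < t") (auto simp: indicator_def)
  qed auto
  also have "\<dots> = T/2" using assms by simp
  finally show ?thesis .
qed

lemma occ_meas: "occ_time X T \<in> borel_measurable M"
proof -
  have Xj: "(\<lambda>p. X (max (fst p) 0) (snd p)) \<in> borel_measurable (lborel \<Otimes>\<^sub>M M)" by (rule Xjoint)
  have "(\<lambda>p. X (max (snd p) 0) (fst p)) \<in> borel_measurable (M \<Otimes>\<^sub>M lborel)"
    using measurable_compose[OF measurable_pair_swap' Xj] by (simp add: case_prod_beta')
  then have [measurable]: "(\<lambda>p. indicator {0..T} (snd p) * ind0 (X (max (snd p) 0) (fst p))) \<in> borel_measurable (M \<Otimes>\<^sub>M lborel)"
    by measurable
  have "(\<lambda>\<omega>. \<integral>t. indicator {0..T} t * ind0 (X (max t 0) \<omega>) \<partial>lborel) \<in> borel_measurable M"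
    by (rule lborel.borel_measurable_lebesgue_integral) (simp add: case_prod_beta')
  moreover have "occ_time X T = (\<lambda>\<omega>. \<integral>t. indicator {0..T} t * ind0 (X (max t 0) \<omega>) \<partial>lborel)"
    unfolding occ_time_def set_lebesgue_integral_def
    by (intro ext Bochner_Integration.integral_cong) (auto simp: indicator_def max_def)
  ultimately show ?thesis by simp
qed

lemma occ_bound: "0 \<le> T \<Longrightarrow> 0 \<le> occ_time X T \<omega> \<and> occ_time X T \<omega> \<le> T"
proof -
  assume T: "0 \<le> T"
  have "occ_time X T \<omega> = (\<integral>t. indicator {0..T} t * ind0 (X t \<omega>) \<partial>lborel)"
    unfolding occ_time_def set_lebesgue_integral_def by simp
  moreover have "(\<integral>t. indicator {0..T} t * ind0 (X t \<omega>) \<partial>lborel) \<le> (\<integral>t. indicator {0..T} t \<partial>lborel)"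
  proof (rule integral_mono')
    show "integrable lborel (\<lambda>t::real. indicator {0..T} t :: real)"
      by (intro integrableI_bounded_set[where A="{0..T}" and B=1]) (auto simp: indicator_def emeasure_lborel_Icc_eq)
  qed (auto simp: indicator_def)
  moreover have "0 \<le> (\<integral>t. indicator {0..T} t * ind0 (X t \<omega>) \<partial>lborel)"
    by (rule integral_nonneg_AE) (auto simp: indicator_def)
  ultimately show ?thesis using T by simp
qed

end

lemma alg1:
  fixes n K f :: real
  assumes "0 < n" "0 \<le> K" "0 < f" "f < 1" "K + f < n"
  defines "e \<equiv> (K + f) / n"
  shows "(K * (K + 1) / (2 * e) + n * (n - 1 - K)) + ((n - 1 - K) * (n - K) / (2 * (1 - e)) + n * K)
       = (3 * n^2 - 2 * n) / 2 - f * (1 - f) / (2 * e * (1 - e))"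
proof -
  have e0: "0 < K + f" using assms by simp
  have e1: "0 < n - K - f" using assms by simp
  have 1: "K * (K + 1) / (2 * e) = K * (K + 1) * n / (2 * (K + f))"
    unfolding e_def using assms e0 by (simp add: field_simps)
  have 2: "(n - 1 - K) * (n - K) / (2 * (1 - e)) = (n - 1 - K) * (n - K) * n / (2 * (n - K - f))"
    unfolding e_def using assms e1 by (simp add: field_simps)
  have 3: "f * (1 - f) / (2 * e * (1 - e)) = f * (1 - f) * n^2 / (2 * (K + f) * (n - K - f))"
    unfolding e_def using assms e0 e1 by (simp add: field_simps power2_eq_square)
  have nz: "K + f \<noteq> 0" "n - K - f \<noteq> 0" using e0 e1 by auto
  show ?thesis unfolding 1 2 3 using nz
    by (simp add: divide_simps) (simp add: algebra_simps power2_eq_square)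
qed

lemma alg0:
  fixes n K :: real
  assumes "0 < n" "0 < K" "K < n"
  defines "e \<equiv> K / n"
  shows "(K * (K + 1) / (2 * e) + n * (n - 1 - K)) + ((n - K) * (n - K + 1) / (2 * (1 - e)) + n * (n - 1 - (n - K)))
       = (3 * n^2 - 2 * n) / 2"
proof -
  have "1 - e = (n - K) / n" unfolding e_def using assms by (simp add: field_simps)
  then show ?thesis unfolding e_def using assms
    by (simp add: field_simps) (simp add: algebra_simps power2_eq_square)
qed

definition Atil :: "nat \<Rightarrow> real \<Rightarrow> real" where
  "Atil n e = (\<Sum>j=1..n-1. min (real n) (real j / e))"

lemma sum_id_real: "(\<Sum>j=1..K. real j) = real K * (real K + 1) / 2"
  by (induction K) (auto simp: field_simps)

lemma Atil_formula:
  fixes e :: real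
  assumes "1 \<le> n" "0 < e" "e < 1"
  shows "Atil n e = real (nat \<lfloor>n * e\<rfloor>) * (real (nat \<lfloor>n * e\<rfloor>) + 1) / (2 * e)
           + real n * (real n - 1 - real (nat \<lfloor>n * e\<rfloor>))"
    and "nat \<lfloor>n * e\<rfloor> \<le> n - 1"
proof -
  define K where "K = nat \<lfloor>n * e\<rfloor>"
  have x0: "0 \<le> n * e" using assms by simp
  have iff: "real j \<le> n * e \<longleftrightarrow> j \<le> K" for j :: nat
  proof -
    have "real j \<le> n * e \<longleftrightarrow> int j \<le> \<lfloor>n * e\<rfloor>" by (simp add: le_floor_iff)
    also have "\<dots> \<longleftrightarrow> j \<le> K" unfolding K_def using x0 by (simp add: le_nat_iff)
    finally show ?thesis .
  qed
  have "n * e < n" using assms by simp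
  then have "\<not> real n \<le> n * e" by simp
  then have Kn: "K < n" using iff[of n] by simp
  then show "nat \<lfloor>n * e\<rfloor> \<le> n - 1" unfolding K_def by simp
  have mn: "min (real n) (real j / e) = (if j \<le> K then real j / e else real n)" for j
  proof -
    have "real j / e \<le> n \<longleftrightarrow> j \<le> K" using iff[of j] assms by (simp add: divide_le_eq mult.commute)
    then show ?thesis by (auto simp: min_def)
  qed
  have "Atil n e = (\<Sum>j\<in>{1..n-1}. if j \<le> K then real j / e else real n)"
    unfolding Atil_def using mn by simp
  also have "\<dots> = (\<Sum>j\<in>{1..n-1} \<inter> {j. j \<le> K}. real j / e) + (\<Sum>j\<in>{1..n-1} \<inter> - {j. j \<le> K}. real n)"
    by (rule sum.If_cases) simp
  also have "{1..n-1} \<inter> {j. j \<le> K} = {1..K}" using Kn by auto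
  also have "{1..n-1} \<inter> - {j. j \<le> K} = {K+1..n-1}" by auto
  also have "(\<Sum>j\<in>{1..K}. real j / e) = (\<Sum>j=1..K. real j) / e"
    by (simp add: sum_divide_distrib)
  also have "\<dots> = real K * (real K + 1) / (2 * e)"
    unfolding sum_id_real by simp
  also have "(\<Sum>j\<in>{K+1..n-1}. real n) = real n * (real n - 1 - real K)"
    using Kn by (simp add: of_nat_diff)
  finally show "Atil n e = real (nat \<lfloor>n * e\<rfloor>) * (real (nat \<lfloor>n * e\<rfloor>) + 1) / (2 * e)
           + real n * (real n - 1 - real (nat \<lfloor>n * e\<rfloor>))" unfolding K_def .
qed

lemma alg_key:
  fixes e :: real
  assumes "1 \<le> n" "0 < e" "e < 1"
  shows "Atil n e + Atil n (1 - e) = (3 * real n ^ 2 - 2 * n) / 2 - psi (n * (1 - e)) / (2 * e * (1 - e))"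
proof -
  define K where "K = nat \<lfloor>n * e\<rfloor>"
  define f where "f = n * e - real K"
  have x0: "0 < n * e" using assms by simp
  have Kfl: "real_of_int \<lfloor>n * e\<rfloor> = real K" unfolding K_def using x0 by simp
  have f0: "0 \<le> f" "f < 1" unfolding f_def using Kfl floor_correct[of "n * e"] by auto
  have Kn: "K \<le> n - 1" unfolding K_def using Atil_formula(2)[OF assms] .
  have n1: "1 - e = (real n - real K - f) / n" unfolding f_def using assms by (simp add: field_simps)
  have eK: "e = (real K + f) / n" unfolding f_def using assms by (simp add: field_simps)
  have A1: "Atil n e = real K * (real K + 1) / (2 * e) + real n * (real n - 1 - real K)"
    unfolding K_def by (rule Atil_formula(1)[OF assms])
  have A2: "Atil n (1 - e) = real (nat \<lfloor>n * (1 - e)\<rfloor>) * (real (nat \<lfloor>n * (1 - e)\<rfloor>) + 1) / (2 * (1 - e))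
           + real n * (real n - 1 - real (nat \<lfloor>n * (1 - e)\<rfloor>))"
    by (rule Atil_formula(1)) (use assms in auto)
  show ?thesis
  proof (cases "f = 0")
    case True
    then have xK: "n * e = real K" unfolding f_def by simp
    have K0: "0 < real K" using xK x0 by simp
    have Kn': "real K < n" using Kn assms by simp
    have h: "n * (1 - e) = real_of_int (int n - int K)" using xK by (simp add: algebra_simps)
    then have fl: "\<lfloor>n * (1 - e)\<rfloor> = int n - int K" by (simp only: floor_of_int)
    have K': "real (nat \<lfloor>n * (1 - e)\<rfloor>) = real n - real K" using fl Kn' by (simp add: of_nat_diff)
    have ps: "psi (n * (1 - e)) = 0"
      unfolding psi_def h by (simp only: frac_of_int) simp
    have "Atil n e + Atil n (1 - e) = (3 * real n^2 - 2 * real n) / 2"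
      unfolding A1 A2 K'
      using alg0[of n "real K"] K0 Kn' eK True assms
      by (simp add: algebra_simps)
    then show ?thesis using ps by simp
  next
    case False
    then have fpos: "0 < f" using f0 by simp
    have fl: "\<lfloor>n * (1 - e)\<rfloor> = int n - int K - 1"
    proof (rule floor_unique)
      show "real_of_int (int n - int K - 1) \<le> n * (1 - e)" using f0 unfolding f_def by (simp add: algebra_simps)
      show "n * (1 - e) < real_of_int (int n - int K - 1) + 1" using fpos unfolding f_def by (simp add: algebra_simps)
    qed
    have Kn2: "K + 1 \<le> n"
    proof -
      have "real K + f < n" using n1 assms by (simp add: field_simps)
      then show ?thesis using fpos by linarith
    qed
    have K': "real (nat \<lfloor>n * (1 - e)\<rfloor>) = real n - 1 - real K" using fl Kn2 by (simp add: of_nat_diff)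
    have ps: "psi (n * (1 - e)) = f * (1 - f)"
    proof -
      have fr: "frac (n * (1 - e)) = 1 - f" unfolding frac_def fl f_def by (simp add: algebra_simps)
      show ?thesis unfolding psi_def fr by (simp add: power2_eq_square algebra_simps)
    qed
    have "Atil n e + Atil n (1 - e) = (3 * real n^2 - 2 * real n) / 2 - f * (1 - f) / (2 * e * (1 - e))"
      unfolding A1 A2 K'
      using alg1[of n "real K" f] fpos f0 Kn2 eK assms
      by (simp add: algebra_simps)
    then show ?thesis using ps by simp
  qed
qed

lemma Ee_pos: "x \<noteq> 0 \<Longrightarrow> y \<noteq> 0 \<Longrightarrow> 0 < Ee \<alpha> x y"
  unfolding Ee_def by (simp add: add_nonneg_pos add_pos_nonneg)

lemma Ee_swap:
  assumes "x \<noteq> 0" "y \<noteq> 0"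
  shows "Ee \<alpha> y x = 1 - Ee \<alpha> x y"
proof -
  define r where "r = \<bar>y / x\<bar> powr \<alpha>"
  have r0: "0 < r" unfolding r_def using assms by simp
  have p1: "\<bar>x / y\<bar> * \<bar>y / x\<bar> = 1" using assms by (simp add: abs_mult[symmetric] mult.commute)
  have "\<bar>x / y\<bar> powr \<alpha> * r = (\<bar>x / y\<bar> * \<bar>y / x\<bar>) powr \<alpha>"
    unfolding r_def by (rule powr_mult[symmetric]; simp)
  also have "\<dots> = 1" unfolding p1 by simp
  finally have "\<bar>x / y\<bar> powr \<alpha> * r = 1" .
  then have s: "\<bar>x / y\<bar> powr \<alpha> = 1 / r" using r0 by (simp add: field_simps)
  have "Ee \<alpha> y x = (1 / r) / (1 + 1 / r)" unfolding Ee_def s ..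
  also have "\<dots> = 1 - r / (1 + r)" using r0 by (simp add: field_simps)
  also have "\<dots> = 1 - Ee \<alpha> x y" unfolding Ee_def r_def ..
  finally show ?thesis .
qed

lemma D_eq: "1 / (1 + \<bar>y / x\<bar> powr \<alpha>) = 1 - Ee \<alpha> x y"
proof -
  have "0 < 1 + \<bar>y / x\<bar> powr \<alpha>" by (simp add: add_pos_nonneg)
  then show ?thesis unfolding Ee_def by (simp add: field_simps)
qed

lemma Lsum:
  fixes T e d :: real
  assumes "1 \<le> n" "0 < d" "T = real n * d" "0 < e" "e < 1"
  shows "(\<Sum>k=2..n. Lfun T (real (k - 1) * d) e) = d * (Atil n e - e * (real n * (real n - 1)) / 2)"
proof -
  have d0: "0 < d" by fact
  have "(\<Sum>k=2..n. Lfun T (real (k - 1) * d) e) = (\<Sum>k=Suc 1..Suc (n - 1). Lfun T (real (k - 1) * d) e)"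
    using assms by (simp add: numeral_2_eq_2)
  also have "\<dots> = (\<Sum>j=1..n-1. Lfun T (real j * d) e)"
    by (subst sum.shift_bounds_cl_Suc_ivl) simp
  also have "\<dots> = (\<Sum>j=1..n-1. d * min (real n) (real j / e) - d * (e * real j))"
  proof (rule sum.cong[OF refl])
    fix j
    have "min T (real j * d / e) = d * min (real n) (real j / e)"
    proof -
      have "real j * d / e = d * (real j / e)" by simp
      then show ?thesis using d0 assms(3) by (simp add: min_mult_distrib_left mult.commute)
    qed
    then show "Lfun T (real j * d) e = d * min (real n) (real j / e) - d * (e * real j)"
      unfolding Lfun_def using assms by (simp add: algebra_simps)
  qed
  also have "\<dots> = d * Atil n e - d * e * (\<Sum>j=1..n-1. real j)"
    unfolding Atil_def by (simp add: sum_subtractf sum_distrib_left mult.assoc)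
  also have "(\<Sum>j=1..n-1. real j) = real n * (real n - 1) / 2"
    unfolding sum_id_real using assms by (simp add: of_nat_diff algebra_simps)
  also have "d * Atil n e - d * e * (real n * (real n - 1) / 2) = d * (Atil n e - e * (real n * (real n - 1)) / 2)"
    by (simp add: algebra_simps)
  finally show ?thesis .
qed

lemma Atil_meas[measurable (raw)]:
  assumes [measurable]: "f \<in> borel_measurable M"
  shows "(\<lambda>x. Atil n (f x)) \<in> borel_measurable M"
  unfolding Atil_def by measurable

lemma Atil_bound: "0 \<le> e \<Longrightarrow> 0 \<le> Atil n e \<and> Atil n e \<le> real n * real n"
proof -
  assume e: "0 \<le> e"
  have "Atil n e \<le> (\<Sum>j=1..n-1. real n)" unfolding Atil_def by (intro sum_mono) simp
  also have "\<dots> \<le> real n * real n" by (simp add: of_nat_diff mult_right_mono)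
  finally have "Atil n e \<le> real n * real n" .
  moreover have "0 \<le> Atil n e" unfolding Atil_def using e by (intro sum_nonneg) simp
  ultimately show ?thesis by simp
qed

context setting begin

lemma main:
  assumes T: "0 < T" and n: "0 < n"
  shows "2 * (\<integral>\<omega>. occ_time X T \<omega> * occ_est X T n \<omega> \<partial>M)
    = 3/4 * T\<^sup>2 + 3/8 * T * (T / real n)
      - 1/8 * (T / real n)\<^sup>2 *
        (\<integral>\<omega>. (let D = 1 / (1 + \<bar>Zt \<omega> / Z \<omega>\<bar> powr \<alpha>)
               in psi (real n * D) / (D * (1 - D))) \<partial>N)"
proof -
  define d where "d = T / real n"
  have d0: "0 < d" unfolding d_def using T n by simp
  have Td: "T = real n * d" unfolding d_def using n by simp
  define u where "u = (\<lambda>k::nat. real (k - 1) * d)"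
  define Eo where "Eo = (\<lambda>\<omega>. Ee \<alpha> (Z \<omega>) (Zt \<omega>))"
  have Eo_m[measurable]: "Eo \<in> borel_measurable N" unfolding Eo_def by measurable
  define G where "G = (\<lambda>e. Atil n e - e * (real n * (real n - 1)) / 2)"
  have G_m[measurable]: "(\<lambda>x. G (f x)) \<in> borel_measurable N" if [measurable]: "f \<in> borel_measurable N" for f
    unfolding G_def by measurable
  define H where "H = (\<integral>\<omega>. (let D = 1 / (1 + \<bar>Zt \<omega> / Z \<omega>\<bar> powr \<alpha>)
               in psi (real n * D) / (D * (1 - D))) \<partial>N)"
  have AEnz: "AE \<omega> in N. Z \<omega> \<noteq> 0 \<and> Zt \<omega> \<noteq> 0" using Z_nz Zt_nz by eventually_elim auto

  have u0: "0 \<le> u k" for k unfolding u_def using d0 by simp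
  have Ik: "integrable M (\<lambda>\<omega>. occ_time X T \<omega> * ind0 (X (u k) \<omega>))" for k
  proof (rule M.integrable_const_bound[where B=T])
    show "AE \<omega> in M. norm (occ_time X T \<omega> * ind0 (X (u k) \<omega>)) \<le> T"
      using occ_bound[of T] T by (intro AE_I2) (auto simp: indicator_def)
    show "(\<lambda>\<omega>. occ_time X T \<omega> * ind0 (X (u k) \<omega>)) \<in> borel_measurable M"
      using occ_meas Xm[OF u0[of k]] by measurable
  qed
  have S1: "(\<integral>\<omega>. occ_time X T \<omega> * occ_est X T n \<omega> \<partial>M)
      = d * (\<Sum>k=1..n. (\<integral>\<omega>. occ_time X T \<omega> * ind0 (X (u k) \<omega>) \<partial>M))"
  proof -
    have "(\<integral>\<omega>. occ_time X T \<omega> * occ_est X T n \<omega> \<partial>M)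
        = (\<integral>\<omega>. d * (\<Sum>k=1..n. occ_time X T \<omega> * ind0 (X (u k) \<omega>)) \<partial>M)"
      unfolding occ_est_def d_def[symmetric] u_def by (simp add: sum_distrib_left algebra_simps)
    also have "\<dots> = d * (\<integral>\<omega>. (\<Sum>k=1..n. occ_time X T \<omega> * ind0 (X (u k) \<omega>)) \<partial>M)"
      by (rule integral_mult_right_zero)
    also have "(\<integral>\<omega>. (\<Sum>k=1..n. occ_time X T \<omega> * ind0 (X (u k) \<omega>)) \<partial>M)
        = (\<Sum>k=1..n. (\<integral>\<omega>. occ_time X T \<omega> * ind0 (X (u k) \<omega>) \<partial>M))"
      by (rule Bochner_Integration.integral_sum) (use Ik in auto)
    finally show ?thesis .
  qed

  have IL: "integrable N (\<lambda>\<omega>. Lfun T (u k) (Eo \<omega>))" if "k \<in> {2..n}" for k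
  proof -
    have "0 < u k" "u k \<le> T" using that d0 unfolding u_def Td
      by (auto simp: of_nat_diff intro!: mult_right_mono)
    then show ?thesis unfolding Eo_def
      using Lfun_bound[OF \<open>0 < u k\<close> \<open>u k \<le> T\<close> Ee_range] by (intro N.integrable_const_bound[where B=T]) auto
  qed
  have S2: "(\<Sum>k=1..n. (\<integral>\<omega>. occ_time X T \<omega> * ind0 (X (u k) \<omega>) \<partial>M))
      = T/2 + (real n - 1) * T / 4 + 1/4 * (\<integral>\<omega>. (\<Sum>k=2..n. Lfun T (u k) (Eo \<omega>)) \<partial>N)"
  proof -
    have "(\<Sum>k=1..n. (\<integral>\<omega>. occ_time X T \<omega> * ind0 (X (u k) \<omega>) \<partial>M))
        = (\<integral>\<omega>. occ_time X T \<omega> * ind0 (X (u 1) \<omega>) \<partial>M) + (\<Sum>k=Suc 1..n. (\<integral>\<omega>. occ_time X T \<omega> * ind0 (X (u k) \<omega>) \<partial>M))"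
      using n by (subst sum.atLeast_Suc_atMost) auto
    also have "(\<integral>\<omega>. occ_time X T \<omega> * ind0 (X (u 1) \<omega>) \<partial>M) = T/2"
      using term1[of T] T by (simp add: u_def)
    also have "(\<Sum>k=Suc 1..n. (\<integral>\<omega>. occ_time X T \<omega> * ind0 (X (u k) \<omega>) \<partial>M))
        = (\<Sum>k=2..n. T/4 + 1/4 * (\<integral>\<omega>. Lfun T (u k) (Eo \<omega>) \<partial>N))"
    proof (rule sum.cong)
      fix k assume k: "k \<in> {2..n}"
      have "0 < u k" "u k \<le> T" using k d0 unfolding u_def Td
        by (auto simp: of_nat_diff intro!: mult_right_mono)
      then show "(\<integral>\<omega>. occ_time X T \<omega> * ind0 (X (u k) \<omega>) \<partial>M) = T/4 + 1/4 * (\<integral>\<omega>. Lfun T (u k) (Eo \<omega>) \<partial>N)"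
        unfolding Eo_def by (rule termk)
    qed (simp add: numeral_2_eq_2)
    also have "\<dots> = (\<Sum>k=2..n. T/4) + 1/4 * (\<Sum>k=2..n. (\<integral>\<omega>. Lfun T (u k) (Eo \<omega>) \<partial>N))"
      by (simp only: sum.distrib sum_distrib_left)
    also have "(\<Sum>k=2..n. T/4) = (real n - 1) * T / 4" using n by (simp add: of_nat_diff)
    also have "(\<Sum>k=2..n. (\<integral>\<omega>. Lfun T (u k) (Eo \<omega>) \<partial>N)) = (\<integral>\<omega>. (\<Sum>k=2..n. Lfun T (u k) (Eo \<omega>)) \<partial>N)"
      by (rule Bochner_Integration.integral_sum[symmetric]) (use IL in auto)
    finally show ?thesis by simp
  qed

  have IG: "integrable N (\<lambda>\<omega>. G (f \<omega>))" if [measurable]: "f \<in> borel_measurable N" "\<And>\<omega>. 0 \<le> f \<omega>" "\<And>\<omega>. f \<omega> \<le> 1" for f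
  proof (rule N.integrable_const_bound[where B="2 * real n * real n"])
    show "AE \<omega> in N. norm (G (f \<omega>)) \<le> 2 * real n * real n"
    proof (rule AE_I2)
      fix \<omega>
      have a: "0 \<le> Atil n (f \<omega>) \<and> Atil n (f \<omega>) \<le> real n * real n" using Atil_bound that(2) by blast
      have b: "0 \<le> f \<omega> * (real n * (real n - 1)) / 2" using that(2) n by (simp add: of_nat_diff)
      have c: "f \<omega> * (real n * (real n - 1)) / 2 \<le> real n * real n"
      proof -
        have "f \<omega> * (real n * (real n - 1)) \<le> 1 * (real n * (real n - 1))"
          using that(3) n by (intro mult_right_mono) auto
        also have "\<dots> \<le> 2 * (real n * real n)" using n by (simp add: algebra_simps)
        finally show ?thesis by simp
      qed
      show "norm (G (f \<omega>)) \<le> 2 * real n * real n" unfolding G_def using a b c by (simp add: abs_le_iff)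
    qed
  qed simp
  have S3: "(\<integral>\<omega>. (\<Sum>k=2..n. Lfun T (u k) (Eo \<omega>)) \<partial>N) = d * (\<integral>\<omega>. G (Eo \<omega>) \<partial>N)"
  proof -
    have "(\<integral>\<omega>. (\<Sum>k=2..n. Lfun T (u k) (Eo \<omega>)) \<partial>N) = (\<integral>\<omega>. d * G (Eo \<omega>) \<partial>N)"
    proof (rule integral_cong_AE)
      show "AE \<omega> in N. (\<Sum>k=2..n. Lfun T (u k) (Eo \<omega>)) = d * G (Eo \<omega>)"
        using AEnz
      proof eventually_elim
        case (elim \<omega>)
        have "0 < Eo \<omega>" "Eo \<omega> < 1" unfolding Eo_def using elim Ee_pos Ee_range by auto
        then show ?case unfolding u_def G_def using Lsum[of n d T "Eo \<omega>"] n d0 Td by simp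
      qed
    qed (simp_all add: u_def)
    then show ?thesis by simp
  qed

  have Eo01: "0 \<le> Eo \<omega>" "Eo \<omega> \<le> 1" "0 \<le> 1 - Eo \<omega>" "1 - Eo \<omega> \<le> 1" for \<omega>
    unfolding Eo_def using Ee_range[of \<alpha> "Z \<omega>" "Zt \<omega>"] by auto
  have S4: "(\<integral>\<omega>. G (Eo \<omega>) \<partial>N) = (\<integral>\<omega>. G (1 - Eo \<omega>) \<partial>N)"
  proof -
    have gm: "(\<lambda>p::real \<times> real. G (Ee \<alpha> (fst p) (snd p))) \<in> borel_measurable borel"
    proof -
      have "(\<lambda>p::real \<times> real. G (Ee \<alpha> (fst p) (snd p))) \<in> borel_measurable (borel \<Otimes>\<^sub>M borel)"
        unfolding G_def by measurable
      then show ?thesis by (simp add: borel_prod)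
    qed
    have "(\<integral>\<omega>. G (Eo \<omega>) \<partial>N) = (\<integral>\<omega>. G (Ee \<alpha> (Zt \<omega>) (Z \<omega>)) \<partial>N)"
      unfolding Eo_def using swap[OF gm] by simp
    also have "\<dots> = (\<integral>\<omega>. G (1 - Eo \<omega>) \<partial>N)"
    proof (rule integral_cong_AE)
      show "AE \<omega> in N. G (Ee \<alpha> (Zt \<omega>) (Z \<omega>)) = G (1 - Eo \<omega>)"
        using AEnz
      proof eventually_elim
        case (elim \<omega>)
        then show ?case using Ee_swap[of "Z \<omega>" "Zt \<omega>" \<alpha>] by (simp add: Eo_def)
      qed
    qed simp_all
    finally show ?thesis .
  qed
  have S5: "H = 2 * real n ^ 2 - real n - 2 * ((\<integral>\<omega>. G (Eo \<omega>) \<partial>N) + (\<integral>\<omega>. G (1 - Eo \<omega>) \<partial>N))"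
  proof -
    have "H = (\<integral>\<omega>. 2 * real n ^ 2 - real n - 2 * (G (Eo \<omega>) + G (1 - Eo \<omega>)) \<partial>N)"
      unfolding H_def
    proof (rule integral_cong_AE)
      show "AE \<omega> in N. (let D = 1 / (1 + \<bar>Zt \<omega> / Z \<omega>\<bar> powr \<alpha>) in psi (real n * D) / (D * (1 - D)))
          = 2 * real n ^ 2 - real n - 2 * (G (Eo \<omega>) + G (1 - Eo \<omega>))"
        using AEnz
      proof eventually_elim
        case (elim \<omega>)
        define e where "e = Eo \<omega>"
        have e: "0 < e" "e < 1" unfolding e_def Eo_def using elim Ee_pos Ee_range by auto
        have D: "1 / (1 + \<bar>Zt \<omega> / Z \<omega>\<bar> powr \<alpha>) = 1 - e" unfolding e_def Eo_def by (rule D_eq)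
        have n1: "1 \<le> n" using n by simp
        have key: "Atil n e + Atil n (1 - e) = (3 * real n ^ 2 - 2 * real n) / 2 - psi (n * (1 - e)) / (2 * e * (1 - e))"
          by (rule alg_key[OF n1 e])
        have ee: "e * (1 - e) \<noteq> 0" using e by simp
        have "psi (n * (1 - e)) / ((1 - e) * (1 - (1 - e))) = 2 * real n ^ 2 - real n - 2 * (G e + G (1 - e))"
          using key ee unfolding G_def by (simp add: field_simps) (simp add: algebra_simps power2_eq_square)
        then show ?case unfolding Let_def D e_def[symmetric] by simp
      qed
    qed (simp_all add: Let_def psi_def frac_def)
    also have "\<dots> = 2 * real n ^ 2 - real n - 2 * ((\<integral>\<omega>. G (Eo \<omega>) \<partial>N) + (\<integral>\<omega>. G (1 - Eo \<omega>) \<partial>N))"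
    proof -
      have i1: "integrable N (\<lambda>\<omega>. G (Eo \<omega>))" by (rule IG) (use Eo01 in auto)
      have i2: "integrable N (\<lambda>\<omega>. G (1 - Eo \<omega>))" by (rule IG) (use Eo01 in auto)
      show ?thesis using i1 i2 by (simp add: N.prob_space)
    qed
    finally show ?thesis .
  qed
  have SG: "(\<integral>\<omega>. G (Eo \<omega>) \<partial>N) = (2 * real n ^ 2 - real n - H) / 4"
    using S4 S5 by simp

  have "2 * (\<integral>\<omega>. occ_time X T \<omega> * occ_est X T n \<omega> \<partial>M)
      = 2 * d * (T/2 + (real n - 1) * T / 4 + 1/4 * (d * ((2 * real n ^ 2 - real n - H) / 4)))"
    using S1 S2 S3 SG by simp
  also have "\<dots> = 3/4 * (real n * d)\<^sup>2 + 3/8 * (real n * d) * d - 1/8 * d\<^sup>2 * H"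
    unfolding Td by (simp add: field_simps power2_eq_square)
  also have "\<dots> = 3/4 * T\<^sup>2 + 3/8 * T * (T / real n) - 1/8 * (T / real n)\<^sup>2 * H"
    using Td d_def by simp
  finally show ?thesis unfolding H_def .
qed

end

theorem lemma12:
  fixes M :: "'a measure" and X :: "real \<Rightarrow> 'a \<Rightarrow> real"
    and N :: "'b measure" and Z Zt :: "'b \<Rightarrow> real"
    and \<alpha> T :: real and n :: nat
  assumes "0 < \<alpha>" and "\<alpha> \<le> 2"
    and "sym_stable_levy M \<alpha> X"
    and "0 < T" and "0 < n"
    and "prob_space N"
    and "Z \<in> borel_measurable N" and "Zt \<in> borel_measurable N"
    and "prob_space.indep_var N borel Z borel Zt"
    and "\<And>u. char (distr N borel Z) u = complex_of_real (exp (- (\<bar>u\<bar> powr \<alpha>)))"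
    and "\<And>u. char (distr N borel Zt) u = complex_of_real (exp (- (\<bar>u\<bar> powr \<alpha>)))"
  shows "2 * (\<integral>\<omega>. occ_time X T \<omega> * occ_est X T n \<omega> \<partial>M)
    = 3/4 * T\<^sup>2 + 3/8 * T * (T / real n)
      - 1/8 * (T / real n)\<^sup>2 *
        (\<integral>\<omega>. (let D = 1 / (1 + \<bar>Zt \<omega> / Z \<omega>\<bar> powr \<alpha>)
               in psi (real n * D) / (D * (1 - D))) \<partial>N)"
proof -
  have PM: "prob_space M" using assms(3) by (simp add: sym_stable_levy_def)
  interpret S: setting M X N Z Zt \<alpha>
  proof (rule setting.intro)
    show "prob_space M" by (rule PM)
    show "prob_space N" by (rule assms(6))
    show "setting_axioms M X N Z Zt \<alpha>"
      by (rule setting_axioms.intro) (use assms in auto)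
  qed
  show ?thesis by (rule S.main[OF assms(4,5)])
qed

end
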